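(* Consider a POMDP with finite state space $\mathcal S$, finite action space $\mathcal A$, finite observation space $\mathcal Y$, initial state $s_1\sim\rho$, joint transition kernel $P(s',y'\mid s,a)$, reward $R_t=r(s_t,a_t)\in[0,R_{\max}]$ and discount factor $\gamma\in[0,1)$. Let $\mathcal Z$ be a finite agent-state space with update $z_{t+1}=\phi(z_t,y_{t+1},a_t)$ and let $\sigma_t:h_t\mapsto z_t$ be the map from histories $h_t=(y_{1:t},a_{1:t-1})$ to agent states obtained by unrolling $\phi$ (with $\sigma_1(h_1)=\phi(z_0,y_1,a_0)$ for a given initial agent state $z_0$ and dummy action $a_0$, and $\sigma_{t+1}(h_{t+1})=\phi(\sigma_t(h_t),y_{t+1},a_t)$). Fix $L\ge1$, write $[t]:=t\bmod L$, $\mathcal L:=\{0,\dots,L-1\}$. Let $\mu=(\mu^0,\dots,\mu^{L-1})$ be a periodic agent-state based behavior policy ($a_t\sim\mu^{[t]}(\cdot\mid z_t)$) such that the induced Markov chain $\{(S_t,Y_t,Z_t,A_t)\}_{t\ge1}$ converges to a cyclic limiting distribution $(\zeta^0_\mu,\dots,\zeta^{L-1}_\mu)$ (for each $\ell$, the law of $(S_t,Y_t,Z_t,A_t)$ converges to $\zeta^\ell_\mu$ along $t\equiv\ell\pmod L$) with $\sum_{(s,y)}\zeta^\ell_\mu(s,y,z,a)>0$ for all $(\ell,z,a)$. Define $r^\ell_\mu(z,a):=\sum_s r(s,a)\zeta^\ell_\mu(s\mid z)$ and $P^\ell_\mu(z'\mid z,a):=\sum_{(s,y')}\mathbf 1_{\{z'=\phi(z,y',a)\}}P(y'\mid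 s,a)\zeta^\ell_\mu(s\mid z)$, let $(Q^0_\mu,\dots,Q^{L-1}_\mu)$ be the unique solution of $Q^\ell_\mu(z,a)=r^\ell_\mu(z,a)+\gamma\sum_{z'}P^\ell_\mu(z'\mid z,a)\max_{a'}Q^{[\ell+1]}_\mu(z',a')$ for all $\ell,z,a$, let $V^\ell_\mu(z):=\max_{a}Q^\ell_\mu(z,a)$, let $\pi^\ell_\mu(z)\in\arg\max_aQ^\ell_\mu(z,a)$, and let $\vec\pi_\mu$ be the history-dependent policy $\vec\pi_{\mu,t}(h_t):=\pi^{[t]}_\mu(\sigma_t(h_t))$. Let $\mathfrak F$ be a convex and balanced set of real-valued functions on $\mathcal Z$, with integral probability metric $d_{\mathfrak F}$ and Minkowski functional $\rho_{\mathfrak F}$. For $\ell\in\mathcal L$ and $t\ge1$, let $\mathcal T(t,\ell):=\{\tau\ge t:[\tau]=\ell\}$ and $$\varepsilon^\ell_t:=\sup_{\tau\in\mathcal T(t,\ell)}\sup_{h_\tau,a_\tau}\Big|\mathbb E[R_\tau\mid h_\tau,a_\tau]-\sum_{s\in\mathcal S}r(s,a_\tau)\zeta^\ell_\mu(s\mid\sigma_\tau(h_\tau),a_\tau)\Big|,$$ $$\delta^\ell_t:=\sup_{\tau\in\mathcal T(t,\ell)}\sup_{h_\tau,a_\tau}d_{\mathfrak F}\Big(\Pr(Z_{\tau+1}=\cdot\mid h_\tau,a_\tau),\,P^\ell_\mu(\cdot\mid\sigma_\tau(h_\tau),a_\tau)\Big).$$ Then for every $t\ge1$, $$\sup_{h_t}\big[V^\star_t(h_t)-V^{\vec\pi_\mu}_t(h_t)\big]\le\frac{2}{1-\gamma^L}\sum_{\ell\in\mathcal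 L}\gamma^\ell\Big[\varepsilon^{[t+\ell]}_{t+\ell}+\gamma\,\delta^{[t+\ell]}_{t+\ell}\,\rho_{\mathfrak F}\big(V^{[t+\ell+1]}_\mu\big)\Big].$$
   Context: $P(y'\mid s,a):=\sum_{s'}P(s',y'\mid s,a)$. Marginals/conditionals of $\zeta^\ell_\mu$ use the same symbol, e.g. $\zeta^\ell_\mu(s\mid z)=\zeta^\ell_\mu(s,z)/\zeta^\ell_\mu(z)$ and $\zeta^\ell_\mu(s\mid z,a)=\zeta^\ell_\mu(s,z,a)/\zeta^\ell_\mu(z,a)$. For a history-dependent (possibly randomized) policy $\vec\pi$, $V^{\vec\pi}_t(h_t):=\mathbb E^{\vec\pi}\big[\sum_{\tau=t}^\infty\gamma^\tau R_\tau\mid h_t\big]$, and $V^\star_t(h_t):=\sup_{\vec\pi}V^{\vec\pi}_t(h_t)$, the supremum being over all history-dependent policies. $\mathfrak F$ balanced means $af\in\mathfrak F$ whenever $f\in\mathfrak F$ and $|a|\le1$. For probability measures $\xi_1,\xi_2$ on $\mathcal Z$, $d_{\mathfrak F}(\xi_1,\xi_2):=\sup_{f\in\mathfrak F}|\int f\,d\xi_1-\int f\,d\xi_2|$; for $f:\mathcal Z\to\mathbb R$, $\rho_{\mathfrak F}(f):=\inf\{\rho>0: f/\rho\in\mathfrak F\}$ (equal to $\infty$ if no such $\rho$ exists). *)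

theory Defs
  imports "HOL-Analysis.Analysis" "HOL-Library.Extended_Real"
begin

text \<open>Finite POMDP with states 's, actions 'a, observations 'y, agent states 'z.
  rho s y : joint initial law of (S_1, Y_1);  P s a s' y : P(s',y' | s,a);  r s a : reward.\<close>

text \<open>A history h_t = (y_1, [(a_1,y_2), ..., (a_{t-1},y_t)]).\<close>
type_synonym ('y,'a) hist = "'y \<times> ('a \<times> 'y) list"

definition hist_len :: "('y,'a) hist \<Rightarrow> nat" where
  "hist_len h = Suc (length (snd h))"

definition hext :: "('y,'a) hist \<Rightarrow> 'a \<Rightarrow> 'y \<Rightarrow> ('y,'a) hist" where
  "hext h a y = (fst h, snd h @ [(a, y)])"

definition agent_state :: "('z \<Rightarrow> 'y \<Rightarrow> 'a \<Rightarrow> 'z) \<Rightarrow> 'z \<Rightarrow> 'a \<Rightarrow> ('y,'a) hist \<Rightarrow> 'z" where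
  "agent_state \<phi> z0 a0 h = foldl (\<lambda>z (a, y). \<phi> z y a) (\<phi> z0 (fst h) a0) (snd h)"

text \<open>Unnormalised forward weights: Pr(S_t = s, Y_{1:t} = y_{1:t}) with the actions of the
  history fixed (policy factors cancel in the conditional law given h_t).\<close>
definition fwd :: "('s::finite \<Rightarrow> 'y \<Rightarrow> real) \<Rightarrow> ('s \<Rightarrow> 'a \<Rightarrow> 's \<Rightarrow> 'y \<Rightarrow> real)
    \<Rightarrow> ('y,'a) hist \<Rightarrow> 's \<Rightarrow> real" where
  "fwd \<rho> P h = foldl (\<lambda>w (a, y). \<lambda>s'. \<Sum>s\<in>UNIV. w s * P s a s' y) (\<lambda>s. \<rho> s (fst h)) (snd h)"

text \<open>A history of length t that has positive probability (under some / any fully mixing policy).\<close>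
definition feasible :: "('s::finite \<Rightarrow> 'y \<Rightarrow> real) \<Rightarrow> ('s \<Rightarrow> 'a \<Rightarrow> 's \<Rightarrow> 'y \<Rightarrow> real)
    \<Rightarrow> nat \<Rightarrow> ('y,'a) hist \<Rightarrow> bool" where
  "feasible \<rho> P t h \<longleftrightarrow> hist_len h = t \<and> (\<Sum>s\<in>UNIV. fwd \<rho> P h s) > 0"

definition belief :: "('s::finite \<Rightarrow> 'y \<Rightarrow> real) \<Rightarrow> ('s \<Rightarrow> 'a \<Rightarrow> 's \<Rightarrow> 'y \<Rightarrow> real)
    \<Rightarrow> ('y,'a) hist \<Rightarrow> 's \<Rightarrow> real" where
  "belief \<rho> P h s = fwd \<rho> P h s / (\<Sum>s'\<in>UNIV. fwd \<rho> P h s')"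

text \<open>History-dependent randomised policies: pi t h a = probability of action a at time t
  given history h.\<close>
definition is_policy :: "(nat \<Rightarrow> ('y,'a::finite) hist \<Rightarrow> 'a \<Rightarrow> real) \<Rightarrow> bool" where
  "is_policy \<pi> \<longleftrightarrow> (\<forall>t h a. 0 \<le> \<pi> t h a) \<and> (\<forall>t h. (\<Sum>a\<in>UNIV. \<pi> t h a) = 1)"

text \<open>disc_ret P r gamma pi n t h w: expectation of sum_{tau=t}^{t+n-1} gamma^tau R_tau,
  starting at history h with (unnormalised) state weights w for S_t, under policy pi.\<close>
fun disc_ret :: "('s::finite \<Rightarrow> 'a::finite \<Rightarrow> 's \<Rightarrow> 'y::finite \<Rightarrow> real) \<Rightarrow> ('s \<Rightarrow> 'a \<Rightarrow> real) \<Rightarrow> real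
    \<Rightarrow> (nat \<Rightarrow> ('y,'a) hist \<Rightarrow> 'a \<Rightarrow> real) \<Rightarrow> nat \<Rightarrow> nat \<Rightarrow> ('y,'a) hist \<Rightarrow> ('s \<Rightarrow> real) \<Rightarrow> real" where
  "disc_ret P r \<gamma> \<pi> 0 t h w = 0"
| "disc_ret P r \<gamma> \<pi> (Suc n) t h w =
     (\<Sum>a\<in>UNIV. \<pi> t h a * (\<gamma> ^ t * (\<Sum>s\<in>UNIV. w s * r s a)
        + (\<Sum>y'\<in>UNIV. disc_ret P r \<gamma> \<pi> n (Suc t) (hext h a y') (\<lambda>s'. \<Sum>s\<in>UNIV. w s * P s a s' y'))))"

definition value_fun :: "('s::finite \<Rightarrow> 'y::finite \<Rightarrow> real) \<Rightarrow> ('s \<Rightarrow> 'a::finite \<Rightarrow> 's \<Rightarrow> 'y \<Rightarrow> real)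
    \<Rightarrow> ('s \<Rightarrow> 'a \<Rightarrow> real) \<Rightarrow> real \<Rightarrow> (nat \<Rightarrow> ('y,'a) hist \<Rightarrow> 'a \<Rightarrow> real) \<Rightarrow> nat \<Rightarrow> ('y,'a) hist \<Rightarrow> real" where
  "value_fun \<rho> P r \<gamma> \<pi> t h = lim (\<lambda>n. disc_ret P r \<gamma> \<pi> n t h (belief \<rho> P h))"

definition opt_value :: "('s::finite \<Rightarrow> 'y::finite \<Rightarrow> real) \<Rightarrow> ('s \<Rightarrow> 'a::finite \<Rightarrow> 's \<Rightarrow> 'y \<Rightarrow> real)
    \<Rightarrow> ('s \<Rightarrow> 'a \<Rightarrow> real) \<Rightarrow> real \<Rightarrow> nat \<Rightarrow> ('y,'a) hist \<Rightarrow> real" where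
  "opt_value \<rho> P r \<gamma> t h = (SUP \<pi>\<in>{\<pi>. is_policy \<pi>}. value_fun \<rho> P r \<gamma> \<pi> t h)"

definition cond_reward :: "('s::finite \<Rightarrow> 'y \<Rightarrow> real) \<Rightarrow> ('s \<Rightarrow> 'a \<Rightarrow> 's \<Rightarrow> 'y \<Rightarrow> real)
    \<Rightarrow> ('s \<Rightarrow> 'a \<Rightarrow> real) \<Rightarrow> ('y,'a) hist \<Rightarrow> 'a \<Rightarrow> real" where
  "cond_reward \<rho> P r h a = (\<Sum>s\<in>UNIV. belief \<rho> P h s * r s a)"

definition next_agent_dist :: "('s::finite \<Rightarrow> 'y::finite \<Rightarrow> real) \<Rightarrow> ('s \<Rightarrow> 'a \<Rightarrow> 's \<Rightarrow> 'y \<Rightarrow> real)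
    \<Rightarrow> ('z \<Rightarrow> 'y \<Rightarrow> 'a \<Rightarrow> 'z) \<Rightarrow> 'z \<Rightarrow> 'a \<Rightarrow> ('y,'a) hist \<Rightarrow> 'a \<Rightarrow> 'z \<Rightarrow> real" where
  "next_agent_dist \<rho> P \<phi> z0 a0 h a z' =
     (\<Sum>s\<in>UNIV. \<Sum>s'\<in>UNIV. \<Sum>y'\<in>UNIV. belief \<rho> P h s * P s a s' y'
        * (if z' = \<phi> (agent_state \<phi> z0 a0 h) y' a then 1 else 0))"

text \<open>Law of (S_t, Y_t, Z_t, A_t) under the periodic agent-state policy mu (index t \<ge> 1;
  the value at t = 0 is an irrelevant dummy).\<close>
fun chain_law :: "('s::finite \<Rightarrow> 'y::finite \<Rightarrow> real) \<Rightarrow> ('s \<Rightarrow> 'a::finite \<Rightarrow> 's \<Rightarrow> 'y \<Rightarrow> real)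
    \<Rightarrow> ('z::finite \<Rightarrow> 'y \<Rightarrow> 'a \<Rightarrow> 'z) \<Rightarrow> 'z \<Rightarrow> 'a \<Rightarrow> nat \<Rightarrow> (nat \<Rightarrow> 'z \<Rightarrow> 'a \<Rightarrow> real)
    \<Rightarrow> nat \<Rightarrow> 's \<Rightarrow> 'y \<Rightarrow> 'z \<Rightarrow> 'a \<Rightarrow> real" where
  "chain_law \<rho> P \<phi> z0 a0 L \<mu> 0 = (\<lambda>s y z a. 0)"
| "chain_law \<rho> P \<phi> z0 a0 L \<mu> (Suc t) =
     (if t = 0 then
        (\<lambda>s y z a. \<rho> s y * (if z = \<phi> z0 y a0 then 1 else 0) * \<mu> (1 mod L) z a)
      else
        (\<lambda>s' y' z' a'. \<Sum>s\<in>UNIV. \<Sum>y\<in>UNIV. \<Sum>z\<in>UNIV. \<Sum>a\<in>UNIV. chain_law \<rho> P \<phi> z0 a0 L \<mu> t s y z a * P s a s' y'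
            * (if z' = \<phi> z y' a then 1 else 0) * \<mu> (Suc t mod L) z' a'))"

definition zeta_z :: "(nat \<Rightarrow> 's::finite \<Rightarrow> 'y::finite \<Rightarrow> 'z \<Rightarrow> 'a::finite \<Rightarrow> real) \<Rightarrow> nat \<Rightarrow> 'z \<Rightarrow> real" where
  "zeta_z \<zeta> l z = (\<Sum>s\<in>UNIV. \<Sum>y\<in>UNIV. \<Sum>a\<in>UNIV. \<zeta> l s y z a)"

definition zeta_s_given_z :: "(nat \<Rightarrow> 's::finite \<Rightarrow> 'y::finite \<Rightarrow> 'z \<Rightarrow> 'a::finite \<Rightarrow> real) \<Rightarrow> nat \<Rightarrow> 's \<Rightarrow> 'z \<Rightarrow> real" where
  "zeta_s_given_z \<zeta> l s z = (\<Sum>y\<in>UNIV. \<Sum>a\<in>UNIV. \<zeta> l s y z a) / zeta_z \<zeta> l z"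

definition zeta_s_given_za :: "(nat \<Rightarrow> 's::finite \<Rightarrow> 'y::finite \<Rightarrow> 'z \<Rightarrow> 'a \<Rightarrow> real) \<Rightarrow> nat \<Rightarrow> 's \<Rightarrow> 'z \<Rightarrow> 'a \<Rightarrow> real" where
  "zeta_s_given_za \<zeta> l s z a = (\<Sum>y\<in>UNIV. \<zeta> l s y z a) / (\<Sum>s'\<in>UNIV. \<Sum>y\<in>UNIV. \<zeta> l s' y z a)"

definition r_mu :: "('s::finite \<Rightarrow> 'a::finite \<Rightarrow> real) \<Rightarrow> (nat \<Rightarrow> 's \<Rightarrow> 'y::finite \<Rightarrow> 'z \<Rightarrow> 'a \<Rightarrow> real)
    \<Rightarrow> nat \<Rightarrow> 'z \<Rightarrow> 'a \<Rightarrow> real" where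
  "r_mu r \<zeta> l z a = (\<Sum>s\<in>UNIV. r s a * zeta_s_given_z \<zeta> l s z)"

definition obs_prob :: "('s::finite \<Rightarrow> 'a \<Rightarrow> 's \<Rightarrow> 'y \<Rightarrow> real) \<Rightarrow> 's \<Rightarrow> 'a \<Rightarrow> 'y \<Rightarrow> real" where
  "obs_prob P s a y' = (\<Sum>s'\<in>UNIV. P s a s' y')"

definition P_mu :: "('s::finite \<Rightarrow> 'a::finite \<Rightarrow> 's \<Rightarrow> 'y::finite \<Rightarrow> real) \<Rightarrow> ('z \<Rightarrow> 'y \<Rightarrow> 'a \<Rightarrow> 'z)
    \<Rightarrow> (nat \<Rightarrow> 's \<Rightarrow> 'y \<Rightarrow> 'z \<Rightarrow> 'a \<Rightarrow> real) \<Rightarrow> nat \<Rightarrow> 'z \<Rightarrow> 'a \<Rightarrow> 'z \<Rightarrow> real" where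
  "P_mu P \<phi> \<zeta> l z a z' =
     (\<Sum>s\<in>UNIV. \<Sum>y'\<in>UNIV. (if z' = \<phi> z y' a then 1 else 0) * obs_prob P s a y' * zeta_s_given_z \<zeta> l s z)"

definition V_mu :: "(nat \<Rightarrow> 'z \<Rightarrow> 'a::finite \<Rightarrow> real) \<Rightarrow> nat \<Rightarrow> 'z \<Rightarrow> real" where
  "V_mu Q l z = Max (range (Q l z))"

definition hist_policy_of :: "('z \<Rightarrow> 'y \<Rightarrow> 'a \<Rightarrow> 'z) \<Rightarrow> 'z \<Rightarrow> 'a \<Rightarrow> nat \<Rightarrow> (nat \<Rightarrow> 'z \<Rightarrow> 'a)
    \<Rightarrow> nat \<Rightarrow> ('y,'a) hist \<Rightarrow> 'a \<Rightarrow> real" where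
  "hist_policy_of \<phi> z0 a0 L \<pi>\<mu> t h a = (if a = \<pi>\<mu> (t mod L) (agent_state \<phi> z0 a0 h) then 1 else 0)"

definition ipm :: "('z::finite \<Rightarrow> real) set \<Rightarrow> ('z \<Rightarrow> real) \<Rightarrow> ('z \<Rightarrow> real) \<Rightarrow> ereal" where
  "ipm F \<xi>1 \<xi>2 = (SUP f\<in>F. ereal \<bar>(\<Sum>z\<in>UNIV. f z * \<xi>1 z) - (\<Sum>z\<in>UNIV. f z * \<xi>2 z)\<bar>)"

definition minkowski :: "('z \<Rightarrow> real) set \<Rightarrow> ('z \<Rightarrow> real) \<Rightarrow> ereal" where
  "minkowski F f = (INF c\<in>{c::real. c > 0 \<and> (\<lambda>z. f z / c) \<in> F}. ereal c)"

definition conv_balanced :: "('z \<Rightarrow> real) set \<Rightarrow> bool" where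
  "conv_balanced F \<longleftrightarrow>
     (\<forall>f\<in>F. \<forall>g\<in>F. \<forall>u::real. 0 \<le> u \<and> u \<le> 1 \<longrightarrow> (\<lambda>z. u * f z + (1 - u) * g z) \<in> F)
   \<and> (\<forall>f\<in>F. \<forall>c::real. \<bar>c\<bar> \<le> 1 \<longrightarrow> (\<lambda>z. c * f z) \<in> F)"

definition eps_err :: "('s::finite \<Rightarrow> 'y::finite \<Rightarrow> real) \<Rightarrow> ('s \<Rightarrow> 'a::finite \<Rightarrow> 's \<Rightarrow> 'y \<Rightarrow> real)
    \<Rightarrow> ('s \<Rightarrow> 'a \<Rightarrow> real) \<Rightarrow> ('z \<Rightarrow> 'y \<Rightarrow> 'a \<Rightarrow> 'z) \<Rightarrow> 'z \<Rightarrow> 'a \<Rightarrow> nat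
    \<Rightarrow> (nat \<Rightarrow> 's \<Rightarrow> 'y \<Rightarrow> 'z \<Rightarrow> 'a \<Rightarrow> real) \<Rightarrow> nat \<Rightarrow> nat \<Rightarrow> ereal" where
  "eps_err \<rho> P r \<phi> z0 a0 L \<zeta> l t =
     (SUP \<tau>\<in>{\<tau>. t \<le> \<tau> \<and> \<tau> mod L = l}. SUP h\<in>{h. feasible \<rho> P \<tau> h}. SUP a\<in>UNIV.
        ereal \<bar>cond_reward \<rho> P r h a
               - (\<Sum>s\<in>UNIV. r s a * zeta_s_given_za \<zeta> l s (agent_state \<phi> z0 a0 h) a)\<bar>)"

definition delta_err :: "('s::finite \<Rightarrow> 'y::finite \<Rightarrow> real) \<Rightarrow> ('s \<Rightarrow> 'a::finite \<Rightarrow> 's \<Rightarrow> 'y \<Rightarrow> real)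
    \<Rightarrow> ('z::finite \<Rightarrow> 'y \<Rightarrow> 'a \<Rightarrow> 'z) \<Rightarrow> 'z \<Rightarrow> 'a \<Rightarrow> nat
    \<Rightarrow> (nat \<Rightarrow> 's \<Rightarrow> 'y \<Rightarrow> 'z \<Rightarrow> 'a \<Rightarrow> real) \<Rightarrow> ('z \<Rightarrow> real) set \<Rightarrow> nat \<Rightarrow> nat \<Rightarrow> ereal" where
  "delta_err \<rho> P \<phi> z0 a0 L \<zeta> F l t =
     (SUP \<tau>\<in>{\<tau>. t \<le> \<tau> \<and> \<tau> mod L = l}. SUP h\<in>{h. feasible \<rho> P \<tau> h}. SUP a\<in>UNIV.
        ipm F (next_agent_dist \<rho> P \<phi> z0 a0 h a) (P_mu P \<phi> \<zeta> l (agent_state \<phi> z0 a0 h) a))"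

end

theory Submission
  imports Defs
begin

lemma fwd_hext: "fwd \<rho> P (hext h a y) = (\<lambda>s'. \<Sum>s\<in>UNIV. fwd \<rho> P h s * P s a s' y)"
  by (simp add: fwd_def hext_def)

lemma agent_state_hext: "agent_state \<phi> z0 a0 (hext h a y) = \<phi> (agent_state \<phi> z0 a0 h) y a"
  by (simp add: agent_state_def hext_def)

lemma hist_len_hext: "hist_len (hext h a y) = Suc (hist_len h)"
  by (simp add: hist_len_def hext_def)

lemma disc_ret_scale:
  "disc_ret P r \<gamma> \<pi> n t h (\<lambda>s. c * w s) = c * disc_ret P r \<gamma> \<pi> n t h w"
proof (induction n arbitrary: t h w)
  case 0 then show ?case by simp
next
  case (Suc n)
  have e: "(\<lambda>s'. \<Sum>s\<in>UNIV. c * w s * P s a s' y') = (\<lambda>s'. c * (\<Sum>s\<in>UNIV. w s * P s a s' y'))" for a y'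
    by (simp add: sum_distrib_left mult.assoc)
  show ?case
    by (simp only: disc_ret.simps e Suc.IH) (simp add: sum_distrib_left sum_distrib_right algebra_simps sum.distrib)
qed

lemma disc_ret_zero: "disc_ret P r \<gamma> \<pi> n t h (\<lambda>s. 0) = 0"
  using disc_ret_scale[where c=0 and w="\<lambda>s. 0"] by simp

lemma fwd_nonneg:
  assumes "\<forall>s y. 0 \<le> \<rho> s y" "\<forall>s a s' y'. 0 \<le> P s a s' y'"
  shows "0 \<le> fwd \<rho> P h s"
proof -
  have "\<forall>s. 0 \<le> fwd \<rho> P (fst h, xs) s" for xs
  proof (induction xs rule: rev_induct)
    case Nil then show ?case using assms by (simp add: fwd_def)
  next
    case (snoc x xs)
    have "fwd \<rho> P (fst h, xs @ [x]) = fwd \<rho> P (hext (fst h, xs) (fst x) (snd x))"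
      by (simp add: hext_def)
    then show ?case using snoc assms by (simp add: fwd_hext sum_nonneg)
  qed
  then show ?thesis by (metis prod.collapse)
qed

lemma disc_ret_mono:
  assumes "is_policy \<pi>" "\<forall>s a. 0 \<le> r s a" "\<forall>s a s' y'. 0 \<le> P s a s' y'" "0 \<le> \<gamma>"
  shows "\<forall>s. 0 \<le> w s \<Longrightarrow> disc_ret P r \<gamma> \<pi> n t h w \<le> disc_ret P r \<gamma> \<pi> (Suc n) t h w"
proof (induction n arbitrary: t h w)
  case 0
  have "0 \<le> \<pi> t h a * (\<gamma> ^ t * (\<Sum>s\<in>UNIV. w s * r s a))" for a
  proof -
    have "0 \<le> \<pi> t h a" using assms(1) unfolding is_policy_def by blast
    moreover have "0 \<le> (\<Sum>s\<in>UNIV. w s * r s a)" using assms 0 by (simp add: sum_nonneg)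
    ultimately show ?thesis using assms(4) by simp
  qed
  then show ?case
    by (simp add: sum_nonneg)
next
  case (Suc n)
  show ?case
    apply (subst disc_ret.simps(2))
    apply (subst disc_ret.simps(2))
    apply (rule sum_mono)
    apply (rule mult_left_mono)
    subgoal for a
      apply (rule add_left_mono)
      apply (rule sum_mono)
      apply (rule Suc.IH)
      using Suc.prems assms by (simp add: sum_nonneg)
    using assms(1) unfolding is_policy_def by blast
qed

lemma sum_hext_mass:
  assumes "\<forall>s a. (\<Sum>s'\<in>UNIV. \<Sum>y'\<in>UNIV. P s a s' y') = 1"
  shows "(\<Sum>y\<in>UNIV. \<Sum>s'\<in>UNIV. fwd \<rho> P (hext h a y) s') = (\<Sum>s\<in>UNIV. fwd \<rho> P h s)"
proof -
  have "(\<Sum>y\<in>UNIV. \<Sum>s'\<in>UNIV. fwd \<rho> P (hext h a y) s')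
      = (\<Sum>y\<in>UNIV. \<Sum>s'\<in>UNIV. \<Sum>s\<in>UNIV. fwd \<rho> P h s * P s a s' y)"
    by (simp add: fwd_hext)
  also have "\<dots> = (\<Sum>s\<in>UNIV. fwd \<rho> P h s * (\<Sum>s'\<in>UNIV. \<Sum>y\<in>UNIV. P s a s' y))"
  proof -
    have "(\<Sum>y\<in>UNIV. \<Sum>s'\<in>UNIV. \<Sum>s\<in>UNIV. fwd \<rho> P h s * P s a s' y)
       = (\<Sum>y\<in>UNIV. \<Sum>s\<in>UNIV. \<Sum>s'\<in>UNIV. fwd \<rho> P h s * P s a s' y)"
      by (rule sum.cong, simp, rule sum.swap)
    also have "\<dots> = (\<Sum>s\<in>UNIV. \<Sum>y\<in>UNIV. \<Sum>s'\<in>UNIV. fwd \<rho> P h s * P s a s' y)"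
      by (rule sum.swap)
    also have "\<dots> = (\<Sum>s\<in>UNIV. \<Sum>s'\<in>UNIV. \<Sum>y\<in>UNIV. fwd \<rho> P h s * P s a s' y)"
      by (rule sum.cong, simp, rule sum.swap)
    finally show ?thesis by (simp add: sum_distrib_left)
  qed
  also have "\<dots> = (\<Sum>s\<in>UNIV. fwd \<rho> P h s)" using assms by simp
  finally show ?thesis .
qed

lemma fwd_zero:
  assumes "\<forall>s y. 0 \<le> \<rho> s y" "\<forall>s a s' y'. 0 \<le> P s a s' y'"
    and "(\<Sum>s\<in>UNIV. fwd \<rho> P h s) = 0"
  shows "fwd \<rho> P h = (\<lambda>s. 0)"
  using assms fwd_nonneg[OF assms(1,2)] by (simp add: sum_nonneg_eq_0_iff fun_eq_iff)

lemma A_step: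
  fixes \<gamma> M :: real
  shows "(\<Sum>k<Suc n. \<gamma>^k * E (\<tau>+k)) + \<gamma>^Suc n * M
   = E \<tau> + \<gamma> * ((\<Sum>k<n. \<gamma>^k * E (Suc \<tau>+k)) + \<gamma>^n * M)"
proof -
  have "(\<Sum>k<Suc n. \<gamma>^k * E (\<tau>+k)) = E \<tau> + (\<Sum>k<n. \<gamma>^Suc k * E (\<tau>+Suc k))"
    by (subst sum.lessThan_Suc_shift) simp
  also have "(\<Sum>k<n. \<gamma>^Suc k * E (\<tau>+Suc k)) = \<gamma> * (\<Sum>k<n. \<gamma>^k * E (Suc \<tau>+k))"
    by (simp add: sum_distrib_left mult.assoc)
  finally show ?thesis by (simp add: distrib_left)
qed

lemma upper_bound:
  fixes \<rho> :: "'s::finite \<Rightarrow> 'y::finite \<Rightarrow> real" and P :: "'s \<Rightarrow> 'a::finite \<Rightarrow> 's \<Rightarrow> 'y \<Rightarrow> real"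
  assumes pol: "is_policy \<pi>"
    and rho_nonneg: "\<forall>s y. 0 \<le> \<rho> s y"
    and P_nonneg: "\<forall>s a s' y'. 0 \<le> P s a s' y'"
    and P_sum: "\<forall>s a. (\<Sum>s'\<in>UNIV. \<Sum>y'\<in>UNIV. P s a s' y') = 1"
    and g: "0 \<le> \<gamma>"
    and Mb: "\<forall>\<tau> h. \<bar>Wv \<tau> h\<bar> \<le> M"
    and K: "\<forall>\<tau> h a. t \<le> \<tau> \<longrightarrow> hist_len h = \<tau> \<longrightarrow> 0 < (\<Sum>s\<in>UNIV. fwd \<rho> P h s) \<longrightarrow>
       (\<Sum>s\<in>UNIV. fwd \<rho> P h s * r s a)
       + \<gamma> * (\<Sum>y\<in>UNIV. (\<Sum>s'\<in>UNIV. fwd \<rho> P (hext h a y) s') * Wv (Suc \<tau>) (hext h a y))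
       \<le> (\<Sum>s\<in>UNIV. fwd \<rho> P h s) * (Wv \<tau> h + E \<tau>)"
  shows "t \<le> \<tau> \<Longrightarrow> hist_len h = \<tau> \<Longrightarrow>
    disc_ret P r \<gamma> \<pi> n \<tau> h (fwd \<rho> P h)
    \<le> \<gamma>^\<tau> * (\<Sum>s\<in>UNIV. fwd \<rho> P h s) * (Wv \<tau> h + ((\<Sum>k<n. \<gamma>^k * E (\<tau>+k)) + \<gamma>^n * M))"
proof (induction n arbitrary: \<tau> h)
  case 0
  have "0 \<le> Wv \<tau> h + M" using Mb by (smt (verit))
  moreover have "0 \<le> (\<Sum>s\<in>UNIV. fwd \<rho> P h s)"
    using fwd_nonneg[OF rho_nonneg P_nonneg] by (simp add: sum_nonneg)
  ultimately show ?case using g by simp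
next
  case (Suc n)
  define S where "S = (\<Sum>s\<in>UNIV. fwd \<rho> P h s)"
  have S0: "0 \<le> S" unfolding S_def using fwd_nonneg[OF rho_nonneg P_nonneg] by (simp add: sum_nonneg)
  show ?case
  proof (cases "S = 0")
    case True
    then have "fwd \<rho> P h = (\<lambda>s. 0)" using fwd_zero[OF rho_nonneg P_nonneg, of h] S_def by simp
    then show ?thesis using True S_def by (simp add: disc_ret_zero del: disc_ret.simps)
  next
    case False
    then have Spos: "0 < S" using S0 by simp
    define A where "A = (\<Sum>k<n. \<gamma>^k * E (Suc \<tau>+k)) + \<gamma>^n * M"
    define Sy where "Sy a y = (\<Sum>s'\<in>UNIV. fwd \<rho> P (hext h a y) s')" for a y
    have IH: "disc_ret P r \<gamma> \<pi> n (Suc \<tau>) (hext h a y) (fwd \<rho> P (hext h a y))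
        \<le> \<gamma>^Suc \<tau> * Sy a y * (Wv (Suc \<tau>) (hext h a y) + A)" for a y
      unfolding Sy_def A_def using Suc.IH[of "Suc \<tau>" "hext h a y"] Suc.prems by (simp add: hist_len_hext)
    have inner: "\<gamma> ^ \<tau> * (\<Sum>s\<in>UNIV. fwd \<rho> P h s * r s a)
          + (\<Sum>y\<in>UNIV. disc_ret P r \<gamma> \<pi> n (Suc \<tau>) (hext h a y) (fwd \<rho> P (hext h a y)))
        \<le> \<gamma>^\<tau> * S * (Wv \<tau> h + (E \<tau> + \<gamma> * A))" for a
    proof -
      have "(\<Sum>y\<in>UNIV. disc_ret P r \<gamma> \<pi> n (Suc \<tau>) (hext h a y) (fwd \<rho> P (hext h a y)))
          \<le> (\<Sum>y\<in>UNIV. \<gamma>^Suc \<tau> * Sy a y * (Wv (Suc \<tau>) (hext h a y) + A))"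
        by (rule sum_mono) (rule IH)
      also have "\<dots> = \<gamma>^\<tau> * (\<gamma> * (\<Sum>y\<in>UNIV. Sy a y * Wv (Suc \<tau>) (hext h a y)))
           + \<gamma>^\<tau> * \<gamma> * A * (\<Sum>y\<in>UNIV. Sy a y)"
        by (simp add: sum_distrib_left sum_distrib_right sum.distrib algebra_simps)
      also have "(\<Sum>y\<in>UNIV. Sy a y) = S"
        unfolding Sy_def S_def by (rule sum_hext_mass[OF P_sum])
      finally have 1: "(\<Sum>y\<in>UNIV. disc_ret P r \<gamma> \<pi> n (Suc \<tau>) (hext h a y) (fwd \<rho> P (hext h a y)))
          \<le> \<gamma>^\<tau> * (\<gamma> * (\<Sum>y\<in>UNIV. Sy a y * Wv (Suc \<tau>) (hext h a y))) + \<gamma>^\<tau> * \<gamma> * A * S" .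
      have 2: "(\<Sum>s\<in>UNIV. fwd \<rho> P h s * r s a) + \<gamma> * (\<Sum>y\<in>UNIV. Sy a y * Wv (Suc \<tau>) (hext h a y))
          \<le> S * (Wv \<tau> h + E \<tau>)"
        using K Suc.prems Spos unfolding S_def Sy_def by blast
      have 3: "\<gamma>^\<tau> * ((\<Sum>s\<in>UNIV. fwd \<rho> P h s * r s a) + \<gamma> * (\<Sum>y\<in>UNIV. Sy a y * Wv (Suc \<tau>) (hext h a y)))
          \<le> \<gamma>^\<tau> * (S * (Wv \<tau> h + E \<tau>))"
        using 2 g by (simp add: mult_left_mono)
      show ?thesis using 1 3 by (simp add: algebra_simps)
    qed
    have "disc_ret P r \<gamma> \<pi> (Suc n) \<tau> h (fwd \<rho> P h)
        = (\<Sum>a\<in>UNIV. \<pi> \<tau> h a * (\<gamma> ^ \<tau> * (\<Sum>s\<in>UNIV. fwd \<rho> P h s * r s a)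
          + (\<Sum>y\<in>UNIV. disc_ret P r \<gamma> \<pi> n (Suc \<tau>) (hext h a y) (fwd \<rho> P (hext h a y)))))"
      by (simp add: fwd_hext)
    also have "\<dots> \<le> (\<Sum>a\<in>UNIV. \<pi> \<tau> h a * (\<gamma>^\<tau> * S * (Wv \<tau> h + (E \<tau> + \<gamma> * A))))"
      apply (rule sum_mono)
      apply (rule mult_left_mono[OF inner])
      using pol unfolding is_policy_def by blast
    also have "\<dots> = \<gamma>^\<tau> * S * (Wv \<tau> h + (E \<tau> + \<gamma> * A))"
    proof -
      have "(\<Sum>a\<in>UNIV. \<pi> \<tau> h a) = 1" using pol unfolding is_policy_def by blast
      then show ?thesis by (simp add: sum_distrib_right[symmetric])
    qed
    finally show ?thesis unfolding S_def A_def using A_step[where n=n and \<gamma>=\<gamma> and E=E and \<tau>=\<tau> and M=M] by simp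
  qed
qed

lemma lower_bound:
  fixes \<rho> :: "'s::finite \<Rightarrow> 'y::finite \<Rightarrow> real" and P :: "'s \<Rightarrow> 'a::finite \<Rightarrow> 's \<Rightarrow> 'y \<Rightarrow> real"
  assumes pol: "\<forall>\<tau> h a. \<pi> \<tau> h a = (if a = act \<tau> h then 1 else 0)"
    and rho_nonneg: "\<forall>s y. 0 \<le> \<rho> s y"
    and P_nonneg: "\<forall>s a s' y'. 0 \<le> P s a s' y'"
    and P_sum: "\<forall>s a. (\<Sum>s'\<in>UNIV. \<Sum>y'\<in>UNIV. P s a s' y') = 1"
    and g: "0 \<le> \<gamma>"
    and Mb: "\<forall>\<tau> h. \<bar>Wv \<tau> h\<bar> \<le> M"
    and K: "\<forall>\<tau> h. t \<le> \<tau> \<longrightarrow> hist_len h = \<tau> \<longrightarrow> 0 < (\<Sum>s\<in>UNIV. fwd \<rho> P h s) \<longrightarrow>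
       (\<Sum>s\<in>UNIV. fwd \<rho> P h s) * (Wv \<tau> h - E \<tau>) \<le>
       (\<Sum>s\<in>UNIV. fwd \<rho> P h s * r s (act \<tau> h))
       + \<gamma> * (\<Sum>y\<in>UNIV. (\<Sum>s'\<in>UNIV. fwd \<rho> P (hext h (act \<tau> h) y) s') * Wv (Suc \<tau>) (hext h (act \<tau> h) y))"
  shows "t \<le> \<tau> \<Longrightarrow> hist_len h = \<tau> \<Longrightarrow>
    \<gamma>^\<tau> * (\<Sum>s\<in>UNIV. fwd \<rho> P h s) * (Wv \<tau> h - ((\<Sum>k<n. \<gamma>^k * E (\<tau>+k)) + \<gamma>^n * M))
    \<le> disc_ret P r \<gamma> \<pi> n \<tau> h (fwd \<rho> P h)"
proof (induction n arbitrary: \<tau> h)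
  case 0
  have "Wv \<tau> h - M \<le> 0" using Mb by (smt (verit))
  moreover have "0 \<le> (\<Sum>s\<in>UNIV. fwd \<rho> P h s)"
    using fwd_nonneg[OF rho_nonneg P_nonneg] by (simp add: sum_nonneg)
  ultimately show ?case using g by (simp add: mult_nonneg_nonpos)
next
  case (Suc n)
  define S where "S = (\<Sum>s\<in>UNIV. fwd \<rho> P h s)"
  have S0: "0 \<le> S" unfolding S_def using fwd_nonneg[OF rho_nonneg P_nonneg] by (simp add: sum_nonneg)
  show ?case
  proof (cases "S = 0")
    case True
    then have "fwd \<rho> P h = (\<lambda>s. 0)" using fwd_zero[OF rho_nonneg P_nonneg, of h] S_def by simp
    then show ?thesis using True S_def by (simp add: disc_ret_zero del: disc_ret.simps)
  next
    case False
    then have Spos: "0 < S" using S0 by simp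
    define A where "A = (\<Sum>k<n. \<gamma>^k * E (Suc \<tau>+k)) + \<gamma>^n * M"
    define a where "a = act \<tau> h"
    define Sy where "Sy y = (\<Sum>s'\<in>UNIV. fwd \<rho> P (hext h a y) s')" for y
    have IH: "\<gamma>^Suc \<tau> * Sy y * (Wv (Suc \<tau>) (hext h a y) - A) \<le>
        disc_ret P r \<gamma> \<pi> n (Suc \<tau>) (hext h a y) (fwd \<rho> P (hext h a y))" for y
      unfolding Sy_def A_def using Suc.IH[of "Suc \<tau>" "hext h a y"] Suc.prems by (simp add: hist_len_hext)
    have inner: "\<gamma>^\<tau> * S * (Wv \<tau> h - (E \<tau> + \<gamma> * A)) \<le>
          \<gamma> ^ \<tau> * (\<Sum>s\<in>UNIV. fwd \<rho> P h s * r s a)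
          + (\<Sum>y\<in>UNIV. disc_ret P r \<gamma> \<pi> n (Suc \<tau>) (hext h a y) (fwd \<rho> P (hext h a y)))"
    proof -
      have "(\<Sum>y\<in>UNIV. \<gamma>^Suc \<tau> * Sy y * (Wv (Suc \<tau>) (hext h a y) - A)) \<le>
          (\<Sum>y\<in>UNIV. disc_ret P r \<gamma> \<pi> n (Suc \<tau>) (hext h a y) (fwd \<rho> P (hext h a y)))"
        by (rule sum_mono) (rule IH)
      moreover have "(\<Sum>y\<in>UNIV. \<gamma>^Suc \<tau> * Sy y * (Wv (Suc \<tau>) (hext h a y) - A))
         = \<gamma>^\<tau> * (\<gamma> * (\<Sum>y\<in>UNIV. Sy y * Wv (Suc \<tau>) (hext h a y)))
           - \<gamma>^\<tau> * \<gamma> * A * (\<Sum>y\<in>UNIV. Sy y)"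
        by (simp add: sum_distrib_left sum_distrib_right sum_subtractf algebra_simps)
      moreover have "(\<Sum>y\<in>UNIV. Sy y) = S"
        unfolding Sy_def S_def by (rule sum_hext_mass[OF P_sum])
      ultimately have 1: "\<gamma>^\<tau> * (\<gamma> * (\<Sum>y\<in>UNIV. Sy y * Wv (Suc \<tau>) (hext h a y))) - \<gamma>^\<tau> * \<gamma> * A * S \<le>
          (\<Sum>y\<in>UNIV. disc_ret P r \<gamma> \<pi> n (Suc \<tau>) (hext h a y) (fwd \<rho> P (hext h a y)))" by simp
      have 2: "S * (Wv \<tau> h - E \<tau>) \<le>
          (\<Sum>s\<in>UNIV. fwd \<rho> P h s * r s a) + \<gamma> * (\<Sum>y\<in>UNIV. Sy y * Wv (Suc \<tau>) (hext h a y))"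
        using K Suc.prems Spos unfolding S_def Sy_def a_def by blast
      have 3: "\<gamma>^\<tau> * (S * (Wv \<tau> h - E \<tau>)) \<le>
          \<gamma>^\<tau> * ((\<Sum>s\<in>UNIV. fwd \<rho> P h s * r s a) + \<gamma> * (\<Sum>y\<in>UNIV. Sy y * Wv (Suc \<tau>) (hext h a y)))"
        using 2 g by (simp add: mult_left_mono)
      show ?thesis using 1 3 by (simp add: algebra_simps)
    qed
    have "disc_ret P r \<gamma> \<pi> (Suc n) \<tau> h (fwd \<rho> P h)
        = (\<Sum>b\<in>UNIV. \<pi> \<tau> h b * (\<gamma> ^ \<tau> * (\<Sum>s\<in>UNIV. fwd \<rho> P h s * r s b)
          + (\<Sum>y\<in>UNIV. disc_ret P r \<gamma> \<pi> n (Suc \<tau>) (hext h b y) (fwd \<rho> P (hext h b y)))))"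
      by (simp add: fwd_hext)
    also have "\<dots> = \<gamma> ^ \<tau> * (\<Sum>s\<in>UNIV. fwd \<rho> P h s * r s a)
          + (\<Sum>y\<in>UNIV. disc_ret P r \<gamma> \<pi> n (Suc \<tau>) (hext h a y) (fwd \<rho> P (hext h a y)))"
    proof -
      have "\<pi> \<tau> h = (\<lambda>b. if b = a then 1 else 0)" unfolding a_def using pol by (simp add: fun_eq_iff del: split_paired_All)
      then show ?thesis by (simp add: if_distrib[where f="\<lambda>x. x * _"] cong: if_cong)
    qed
    finally show ?thesis using inner unfolding S_def A_def using A_step[where n=n and \<gamma>=\<gamma> and E=E and \<tau>=\<tau> and M=M] by simp
  qed
qed

lemma chain_factor:
  assumes "(\<Sum>a\<in>UNIV. \<mu> (Suc t' mod L) z a) = 1"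
  shows "chain_law \<rho> P \<phi> z0 a0 L \<mu> (Suc t') s y z a
     = (\<Sum>a'\<in>UNIV. chain_law \<rho> P \<phi> z0 a0 L \<mu> (Suc t') s y z a') * \<mu> (Suc t' mod L) z a"
proof (cases "t' = 0")
  case True
  have e: "chain_law \<rho> P \<phi> z0 a0 L \<mu> (Suc t') s y z b = (\<rho> s y * (if z = \<phi> z0 y a0 then 1 else 0)) * \<mu> (Suc t' mod L) z b" for b
    using True by simp
  show ?thesis unfolding e using assms by (simp only: sum_distrib_left[symmetric] mult_1_right)
next
  case False
  define X where "X = (\<Sum>s0\<in>UNIV. \<Sum>y0\<in>UNIV. \<Sum>z1\<in>UNIV. \<Sum>a1\<in>UNIV.
      chain_law \<rho> P \<phi> z0 a0 L \<mu> t' s0 y0 z1 a1 * P s0 a1 s y * (if z = \<phi> z1 y a1 then 1 else 0))"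
  have e: "chain_law \<rho> P \<phi> z0 a0 L \<mu> (Suc t') s y z b = X * \<mu> (Suc t' mod L) z b" for b
    using False unfolding X_def by (simp only: chain_law.simps(2) if_False sum_distrib_right)
  show ?thesis unfolding e using assms by (simp only: sum_distrib_left[symmetric] mult_1_right)
qed

lemma zeta_factor:
  assumes L_pos: "1 \<le> L"
    and mu_policy: "\<forall>l<L. \<forall>z. (\<forall>a. 0 \<le> \<mu> l z a) \<and> (\<Sum>a\<in>UNIV. \<mu> l z a) = 1"
    and conv: "\<forall>l<L. \<forall>s y z a.
       (\<lambda>k. chain_law \<rho> P \<phi> z0 a0 L \<mu> (l + k * L) s y z a) \<longlonglongrightarrow> \<zeta> l s y z a"
    and l: "l < L"
  shows "\<zeta> l s y z a = (\<Sum>a'\<in>UNIV. \<zeta> l s y z a') * \<mu> l z a"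
proof -
  let ?c = "\<lambda>k s y z a. chain_law \<rho> P \<phi> z0 a0 L \<mu> (l + k * L) s y z a"
  have eq: "?c k s y z a = (\<Sum>a'\<in>UNIV. ?c k s y z a') * \<mu> l z a" if "k \<ge> 1" for k
  proof -
    have "l + k * L \<noteq> 0" using that L_pos by simp
    then obtain t' where t': "l + k * L = Suc t'" using not0_implies_Suc by blast
    have m: "Suc t' mod L = l" using t'[symmetric] l by simp
    have "(\<Sum>a\<in>UNIV. \<mu> (Suc t' mod L) z a) = 1" using mu_policy m l by simp
    from chain_factor[of \<mu> t' L z \<rho> P \<phi> z0 a0 s y a, OF this]
    show ?thesis unfolding t' m .
  qed
  have lim2: "(\<lambda>k. (\<Sum>a'\<in>UNIV. ?c k s y z a') * \<mu> l z a) \<longlonglongrightarrow> (\<Sum>a'\<in>UNIV. \<zeta> l s y z a') * \<mu> l z a"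
    by (intro tendsto_intros) (use conv l in blast)
  have lim1: "(\<lambda>k. (\<Sum>a'\<in>UNIV. ?c k s y z a') * \<mu> l z a) \<longlonglongrightarrow> \<zeta> l s y z a"
  proof (rule Lim_transform_eventually[OF conv[rule_format, OF l]])
    show "\<forall>\<^sub>F k in sequentially. ?c k s y z a = (\<Sum>a'\<in>UNIV. ?c k s y z a') * \<mu> l z a"
      unfolding eventually_sequentially by (rule exI[of _ 1]) (simp add: eq)
  qed
  show ?thesis using LIMSEQ_unique[OF lim1 lim2] .
qed

lemma zeta_cond_eq:
  assumes L_pos: "1 \<le> L"
    and mu_policy: "\<forall>l<L. \<forall>z. (\<forall>a. 0 \<le> \<mu> l z a) \<and> (\<Sum>a\<in>UNIV. \<mu> l z a) = 1"
    and conv: "\<forall>l<L. \<forall>s y z a.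
       (\<lambda>k. chain_law \<rho> P \<phi> z0 a0 L \<mu> (l + k * L) s y z a) \<longlonglongrightarrow> \<zeta> l s y z a"
    and zeta_pos: "\<forall>l<L. \<forall>z a. (\<Sum>s\<in>UNIV. \<Sum>y\<in>UNIV. \<zeta> l s y z a) > 0"
    and l: "l < L"
  shows "zeta_s_given_za \<zeta> l s z a = zeta_s_given_z \<zeta> l s z"
proof -
  have f: "\<zeta> l s' y z a = (\<Sum>a'\<in>UNIV. \<zeta> l s' y z a') * \<mu> l z a" for s' y
    using zeta_factor[OF L_pos mu_policy conv l] .
  have num: "(\<Sum>y\<in>UNIV. \<zeta> l s y z a) = (\<Sum>y\<in>UNIV. \<Sum>a'\<in>UNIV. \<zeta> l s y z a') * \<mu> l z a"
    by (simp add: f sum_distrib_right)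
  have den: "(\<Sum>s'\<in>UNIV. \<Sum>y\<in>UNIV. \<zeta> l s' y z a) = zeta_z \<zeta> l z * \<mu> l z a"
    unfolding zeta_z_def by (simp add: f sum_distrib_right)
  have "0 < (\<Sum>s'\<in>UNIV. \<Sum>y\<in>UNIV. \<zeta> l s' y z a)" using zeta_pos l by blast
  then have "0 < zeta_z \<zeta> l z * \<mu> l z a" using den by simp
  then have "\<mu> l z a \<noteq> 0" by auto
  then show ?thesis unfolding zeta_s_given_za_def zeta_s_given_z_def num den by simp
qed


lemma cond_reward_mass:
  assumes "0 < (\<Sum>s\<in>UNIV. fwd \<rho> P h s)"
  shows "(\<Sum>s\<in>UNIV. fwd \<rho> P h s * r s a) = (\<Sum>s\<in>UNIV. fwd \<rho> P h s) * cond_reward \<rho> P r h a"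
proof -
  have "cond_reward \<rho> P r h a = (\<Sum>s\<in>UNIV. fwd \<rho> P h s * r s a) / (\<Sum>s\<in>UNIV. fwd \<rho> P h s)"
    unfolding cond_reward_def belief_def by (simp add: sum_divide_distrib[symmetric] times_divide_eq_left)
  then show ?thesis using assms by simp
qed

lemma nad_mass:
  fixes \<rho> :: "'s::finite \<Rightarrow> 'y::finite \<Rightarrow> real" and V :: "'z::finite \<Rightarrow> real"
  assumes Sp: "0 < (\<Sum>s\<in>UNIV. fwd \<rho> P h s)"
  shows "(\<Sum>y\<in>UNIV. (\<Sum>s'\<in>UNIV. fwd \<rho> P (hext h a y) s') * V (\<phi> (agent_state \<phi> z0 a0 h) y a))
    = (\<Sum>s\<in>UNIV. fwd \<rho> P h s) * (\<Sum>z'\<in>UNIV. next_agent_dist \<rho> P \<phi> z0 a0 h a z' * V z')"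
proof -
  define S where "S = (\<Sum>s\<in>UNIV. fwd \<rho> P h s)"
  define g where "g y = \<phi> (agent_state \<phi> z0 a0 h) y a" for y
  define c where "c y = (\<Sum>s\<in>UNIV. \<Sum>s'\<in>UNIV. belief \<rho> P h s * P s a s' y)" for y
  have n: "next_agent_dist \<rho> P \<phi> z0 a0 h a z' = (\<Sum>y\<in>UNIV. c y * (if z' = g y then 1 else 0))" for z'
  proof -
    have "next_agent_dist \<rho> P \<phi> z0 a0 h a z'
       = (\<Sum>s\<in>UNIV. \<Sum>s'\<in>UNIV. \<Sum>y\<in>UNIV. belief \<rho> P h s * P s a s' y * (if z' = g y then 1 else 0))"
      unfolding next_agent_dist_def g_def ..
    also have "\<dots> = (\<Sum>s\<in>UNIV. \<Sum>y\<in>UNIV. \<Sum>s'\<in>UNIV. belief \<rho> P h s * P s a s' y * (if z' = g y then 1 else 0))"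
      by (rule sum.cong, simp, rule sum.swap)
    also have "\<dots> = (\<Sum>y\<in>UNIV. \<Sum>s\<in>UNIV. \<Sum>s'\<in>UNIV. belief \<rho> P h s * P s a s' y * (if z' = g y then 1 else 0))"
      by (rule sum.swap)
    also have "\<dots> = (\<Sum>y\<in>UNIV. c y * (if z' = g y then 1 else 0))"
      unfolding c_def by (simp add: sum_distrib_right)
    finally show ?thesis .
  qed
  have "(\<Sum>z'\<in>UNIV. next_agent_dist \<rho> P \<phi> z0 a0 h a z' * V z')
      = (\<Sum>z'\<in>UNIV. \<Sum>y\<in>UNIV. c y * (if z' = g y then 1 else 0) * V z')"
    unfolding n by (simp add: sum_distrib_right)
  also have "\<dots> = (\<Sum>y\<in>UNIV. \<Sum>z'\<in>UNIV. c y * (if z' = g y then 1 else 0) * V z')"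
    by (rule sum.swap)
  also have "\<dots> = (\<Sum>y\<in>UNIV. c y * V (g y))"
    by (simp add: if_distrib[where f="\<lambda>x. _ * x * _"] cong: if_cong)
  finally have 1: "(\<Sum>z'\<in>UNIV. next_agent_dist \<rho> P \<phi> z0 a0 h a z' * V z') = (\<Sum>y\<in>UNIV. c y * V (g y))" .
  have 2: "(\<Sum>s'\<in>UNIV. fwd \<rho> P (hext h a y) s') = S * c y" for y
  proof -
    have "S * c y = (\<Sum>s\<in>UNIV. \<Sum>s'\<in>UNIV. fwd \<rho> P h s * P s a s' y)"
      unfolding c_def belief_def S_def using Sp by (simp add: sum_distrib_left)
    also have "\<dots> = (\<Sum>s'\<in>UNIV. \<Sum>s\<in>UNIV. fwd \<rho> P h s * P s a s' y)" by (rule sum.swap)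
    finally show ?thesis by (simp add: fwd_hext)
  qed
  show ?thesis unfolding 1 2 g_def[symmetric] S_def[symmetric] by (simp add: sum_distrib_left mult.assoc)
qed


lemma ipm_mink:
  fixes F :: "('z::finite \<Rightarrow> real) set"
  assumes d: "ipm F \<xi>1 \<xi>2 = ereal d" and m: "minkowski F f = ereal m"
  shows "\<bar>(\<Sum>z\<in>UNIV. f z * \<xi>1 z) - (\<Sum>z\<in>UNIV. f z * \<xi>2 z)\<bar> \<le> d * m"
proof -
  define C where "C = {c::real. c > 0 \<and> (\<lambda>z. f z / c) \<in> F}"
  define X where "X = \<bar>(\<Sum>z\<in>UNIV. f z * \<xi>1 z) - (\<Sum>z\<in>UNIV. f z * \<xi>2 z)\<bar>"
  have mC: "minkowski F f = (INF c\<in>C. ereal c)" unfolding minkowski_def C_def ..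
  have Cne: "C \<noteq> {}"
  proof
    assume "C = {}"
    then have "minkowski F f = \<infinity>" using mC by (simp add: top_ereal_def)
    then show False using m by simp
  qed
  have bnd: "X \<le> c * d" if c: "c \<in> C" for c
  proof -
    have cp: "c > 0" and fc: "(\<lambda>z. f z / c) \<in> F" using c unfolding C_def by auto
    have "ereal \<bar>(\<Sum>z\<in>UNIV. f z / c * \<xi>1 z) - (\<Sum>z\<in>UNIV. f z / c * \<xi>2 z)\<bar> \<le> ipm F \<xi>1 \<xi>2"
      unfolding ipm_def by (rule SUP_upper[OF fc])
    moreover have "\<bar>(\<Sum>z\<in>UNIV. f z / c * \<xi>1 z) - (\<Sum>z\<in>UNIV. f z / c * \<xi>2 z)\<bar> = X / c"
    proof -
      have "(\<Sum>z\<in>UNIV. f z / c * \<xi>1 z) - (\<Sum>z\<in>UNIV. f z / c * \<xi>2 z)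
          = ((\<Sum>z\<in>UNIV. f z * \<xi>1 z) - (\<Sum>z\<in>UNIV. f z * \<xi>2 z)) / c"
        by (simp add: sum_divide_distrib[symmetric] diff_divide_distrib times_divide_eq_left)
      then show ?thesis unfolding X_def using cp by simp
    qed
    ultimately have "X / c \<le> d" using d by simp
    then show ?thesis using cp by (simp add: divide_le_eq mult.commute)
  qed
  obtain c0 where c0: "c0 \<in> C" using Cne by blast
  have X0: "0 \<le> X" unfolding X_def by simp
  have d0: "0 \<le> d"
  proof -
    have "X \<le> c0 * d" using bnd c0 .
    moreover have "c0 > 0" using c0 unfolding C_def by auto
    ultimately show ?thesis using X0 by (smt (verit) mult_pos_neg)
  qed
  show ?thesis
  proof (cases "d = 0")
    case True
    then show ?thesis using bnd[OF c0] X0 unfolding X_def by simp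
  next
    case False
    then have dp: "d > 0" using d0 by simp
    have "ereal (X / d) \<le> (INF c\<in>C. ereal c)"
    proof (rule INF_greatest)
      fix c assume "c \<in> C"
      then show "ereal (X / d) \<le> ereal c" using bnd dp by (simp add: divide_le_eq)
    qed
    then have "ereal (X / d) \<le> ereal m" using mC m by simp
    then have "X / d \<le> m" by simp
    then show ?thesis using dp unfolding X_def by (simp add: divide_le_eq mult.commute)
  qed
qed


lemma pos_sum_exists:
  fixes f :: "'b::finite \<Rightarrow> real"
  assumes "0 < (\<Sum>x\<in>UNIV. f x)" shows "\<exists>x. 0 < f x"
proof (rule ccontr)
  assume "\<not> (\<exists>x. 0 < f x)"
  then have "(\<Sum>x\<in>UNIV. f x) \<le> 0" by (intro sum_nonpos) (simp add: not_less)
  then show False using assms by simp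
qed

lemma feasible_exists:
  fixes \<rho> :: "'s::finite \<Rightarrow> 'y::finite \<Rightarrow> real" and P :: "'s \<Rightarrow> 'a \<Rightarrow> 's \<Rightarrow> 'y \<Rightarrow> real"
  assumes rho_sum: "(\<Sum>s\<in>UNIV. \<Sum>y\<in>UNIV. \<rho> s y) = 1"
    and P_sum: "\<forall>s a. (\<Sum>s'\<in>UNIV. \<Sum>y'\<in>UNIV. P s a s' y') = 1"
  shows "1 \<le> n \<Longrightarrow> \<exists>h. feasible \<rho> P n h"
proof (induction n rule: dec_induct)
  case base
  have "0 < (\<Sum>y\<in>UNIV. \<Sum>s\<in>UNIV. \<rho> s y)" using rho_sum sum.swap[of "\<lambda>s y. \<rho> s y" UNIV UNIV] by simp
  then obtain y where y: "0 < (\<Sum>s\<in>UNIV. \<rho> s y)" using pos_sum_exists by blast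
  have "feasible \<rho> P 1 (y, [])" unfolding feasible_def hist_len_def fwd_def using y by simp
  then show ?case by blast
next
  case (step m)
  then obtain h where h: "feasible \<rho> P m h" by blast
  then have "0 < (\<Sum>y\<in>UNIV. \<Sum>s'\<in>UNIV. fwd \<rho> P (hext h (undefined::'a) y) s')"
    unfolding feasible_def using sum_hext_mass[OF P_sum] by simp
  then obtain y where "0 < (\<Sum>s'\<in>UNIV. fwd \<rho> P (hext h (undefined::'a) y) s')" using pos_sum_exists by blast
  then have "feasible \<rho> P (Suc m) (hext h undefined y)" using h unfolding feasible_def by (simp add: hist_len_hext)
  then show ?case by blast
qed

lemma chain_law_nonneg:
  assumes rho_nonneg: "\<forall>s y. 0 \<le> \<rho> s y"
    and P_nonneg: "\<forall>s a s' y'. 0 \<le> P s a s' y'"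
    and L_pos: "1 \<le> L"
    and mu_policy: "\<forall>l<L. \<forall>z. (\<forall>a. 0 \<le> \<mu> l z a) \<and> (\<Sum>a\<in>UNIV. \<mu> l z a) = 1"
  shows "\<forall>s y z a. 0 \<le> chain_law \<rho> P \<phi> z0 a0 L \<mu> n s y z a"
proof (induction n)
  case 0 then show ?case by simp
next
  case (Suc n)
  have mu: "0 \<le> \<mu> (Suc n mod L) z a" for z a using mu_policy L_pos by simp
  show ?case
  proof (cases "n = 0")
    case True then show ?thesis using rho_nonneg mu by simp
  next
    case False
    then show ?thesis using Suc.IH P_nonneg mu
      by (simp del: chain_law.simps add: chain_law.simps(2) sum_nonneg)
  qed
qed

lemma zeta_nonneg:
  assumes rho_nonneg: "\<forall>s y. 0 \<le> \<rho> s y"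
    and P_nonneg: "\<forall>s a s' y'. 0 \<le> P s a s' y'"
    and L_pos: "1 \<le> L"
    and mu_policy: "\<forall>l<L. \<forall>z. (\<forall>a. 0 \<le> \<mu> l z a) \<and> (\<Sum>a\<in>UNIV. \<mu> l z a) = 1"
    and conv: "\<forall>l<L. \<forall>s y z a.
       (\<lambda>k. chain_law \<rho> P \<phi> z0 a0 L \<mu> (l + k * L) s y z a) \<longlonglongrightarrow> \<zeta> l s y z a"
    and l: "l < L"
  shows "0 \<le> \<zeta> l s y z a"
  using conv[rule_format, OF l, of s y z a] chain_law_nonneg[OF rho_nonneg P_nonneg L_pos mu_policy]
  by (intro LIMSEQ_le_const) auto

lemma sum_split_add:
  fixes L n :: nat and g :: "nat \<Rightarrow> 'b::comm_monoid_add"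
  shows "(\<Sum>k<L+n. g k) = (\<Sum>k<L. g k) + (\<Sum>k<n. g (L+k))"
  by (induction n) (simp_all add: add.assoc)

lemma periodic_bound:
  fixes \<gamma> :: real and f :: "nat \<Rightarrow> real"
  assumes g: "0 \<le> \<gamma>" "\<gamma> < 1" and L: "1 \<le> L" and f: "\<forall>l<L. 0 \<le> f l"
  shows "(\<Sum>k<n. \<gamma>^k * f (k mod L)) \<le> (\<Sum>l<L. \<gamma>^l * f l) / (1 - \<gamma>^L)"
proof -
  define T where "T = (\<Sum>k<n. \<gamma>^k * f (k mod L))"
  have gl: "\<gamma>^L < 1" using g L by (simp add: power_less_one_iff)
  have "T \<le> (\<Sum>k<L+n. \<gamma>^k * f (k mod L))"
    unfolding T_def using f g by (intro sum_mono2) auto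
  also have "\<dots> = (\<Sum>k<L. \<gamma>^k * f (k mod L)) + (\<Sum>k<n. \<gamma>^(L+k) * f ((L+k) mod L))"
    by (rule sum_split_add)
  also have "(\<Sum>k<L. \<gamma>^k * f (k mod L)) = (\<Sum>l<L. \<gamma>^l * f l)" by simp
  also have "(\<Sum>k<n. \<gamma>^(L+k) * f ((L+k) mod L)) = \<gamma>^L * T"
    unfolding T_def by (simp add: sum_distrib_left power_add mult.assoc)
  finally have "T * (1 - \<gamma>^L) \<le> (\<Sum>l<L. \<gamma>^l * f l)" by (simp add: algebra_simps)
  then show ?thesis unfolding T_def using gl by (simp add: le_divide_eq)
qed


lemma belief_norm:
  assumes "0 < (\<Sum>s\<in>UNIV. fwd \<rho> P h s)" "\<forall>s y. 0 \<le> \<rho> s y" "\<forall>s a s' y'. 0 \<le> P s a s' y'"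
  shows "\<forall>s. 0 \<le> belief \<rho> P h s" "(\<Sum>s\<in>UNIV. belief \<rho> P h s) = 1"
  using assms fwd_nonneg[OF assms(2,3)] unfolding belief_def
  by (auto simp: sum_divide_distrib[symmetric])

lemma convex_bound:
  fixes w r :: "'s::finite \<Rightarrow> real"
  assumes "\<forall>s. 0 \<le> w s" "(\<Sum>s\<in>UNIV. w s) = 1" "\<forall>s. 0 \<le> r s \<and> r s \<le> R"
  shows "0 \<le> (\<Sum>s\<in>UNIV. w s * r s)" "(\<Sum>s\<in>UNIV. w s * r s) \<le> R"
proof -
  show "0 \<le> (\<Sum>s\<in>UNIV. w s * r s)" using assms by (simp add: sum_nonneg)
  have "(\<Sum>s\<in>UNIV. w s * r s) \<le> (\<Sum>s\<in>UNIV. w s * R)"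
    using assms by (intro sum_mono mult_left_mono) auto
  also have "\<dots> = R" using assms(2) by (simp add: sum_distrib_right[symmetric])
  finally show "(\<Sum>s\<in>UNIV. w s * r s) \<le> R" .
qed

lemma value_conv:
  fixes \<rho> :: "'s::finite \<Rightarrow> 'y::finite \<Rightarrow> real" and P :: "'s \<Rightarrow> 'a::finite \<Rightarrow> 's \<Rightarrow> 'y \<Rightarrow> real"
  assumes pol: "is_policy \<pi>"
    and rho_nonneg: "\<forall>s y. 0 \<le> \<rho> s y"
    and P_nonneg: "\<forall>s a s' y'. 0 \<le> P s a s' y'"
    and r_nonneg: "\<forall>s a. 0 \<le> r s a"
    and g: "0 \<le> \<gamma>"
    and Sp: "0 < (\<Sum>s\<in>UNIV. fwd \<rho> P h s)"
    and up: "\<forall>n. disc_ret P r \<gamma> \<pi> n t h (fwd \<rho> P h) \<le> (\<Sum>s\<in>UNIV. fwd \<rho> P h s) * Bd"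
  shows "(\<lambda>n. disc_ret P r \<gamma> \<pi> n t h (fwd \<rho> P h) / (\<Sum>s\<in>UNIV. fwd \<rho> P h s))
            \<longlonglongrightarrow> value_fun \<rho> P r \<gamma> \<pi> t h"
proof -
  define S where "S = (\<Sum>s\<in>UNIV. fwd \<rho> P h s)"
  have b: "belief \<rho> P h = (\<lambda>s. (1/S) * fwd \<rho> P h s)" unfolding belief_def S_def by auto
  have u: "disc_ret P r \<gamma> \<pi> n t h (belief \<rho> P h) = disc_ret P r \<gamma> \<pi> n t h (fwd \<rho> P h) / S" for n
    unfolding b disc_ret_scale by simp
  have inc: "incseq (\<lambda>n. disc_ret P r \<gamma> \<pi> n t h (belief \<rho> P h))"
  proof (rule incseq_SucI)
    fix n
    show "disc_ret P r \<gamma> \<pi> n t h (belief \<rho> P h) \<le> disc_ret P r \<gamma> \<pi> (Suc n) t h (belief \<rho> P h)"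
      by (rule disc_ret_mono[OF pol r_nonneg P_nonneg g]) (use belief_norm(1)[OF Sp rho_nonneg P_nonneg] in blast)
  qed
  have bd: "\<forall>n. disc_ret P r \<gamma> \<pi> n t h (belief \<rho> P h) \<le> Bd"
    using up Sp unfolding u S_def by (simp add: divide_le_eq mult.commute)
  obtain l where l: "(\<lambda>n. disc_ret P r \<gamma> \<pi> n t h (belief \<rho> P h)) \<longlonglongrightarrow> l"
    using incseq_convergent[OF inc bd] by blast
  have "value_fun \<rho> P r \<gamma> \<pi> t h = l" unfolding value_fun_def using l by (rule limI)
  then show ?thesis using l unfolding u S_def by simp
qed

lemma hist_policy_is_policy: "is_policy (hist_policy_of \<phi> z0 a0 L \<pi>\<mu>)"
  unfolding is_policy_def hist_policy_of_def by simp

theorem theorem2: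
  fixes \<rho> :: "'s::finite \<Rightarrow> 'y::finite \<Rightarrow> real"
    and P :: "'s \<Rightarrow> 'a::finite \<Rightarrow> 's \<Rightarrow> 'y \<Rightarrow> real"
    and r :: "'s \<Rightarrow> 'a \<Rightarrow> real"
    and Rmax \<gamma> :: real
    and \<phi> :: "'z::finite \<Rightarrow> 'y \<Rightarrow> 'a \<Rightarrow> 'z" and z0 :: 'z and a0 :: 'a
    and L :: nat
    and \<mu> :: "nat \<Rightarrow> 'z \<Rightarrow> 'a \<Rightarrow> real"
    and \<zeta> :: "nat \<Rightarrow> 's \<Rightarrow> 'y \<Rightarrow> 'z \<Rightarrow> 'a \<Rightarrow> real"
    and Q :: "nat \<Rightarrow> 'z \<Rightarrow> 'a \<Rightarrow> real"
    and \<pi>\<mu> :: "nat \<Rightarrow> 'z \<Rightarrow> 'a"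
    and F :: "('z \<Rightarrow> real) set"
    and t :: nat
  assumes rho_nonneg: "\<forall>s y. 0 \<le> \<rho> s y"
    and rho_sum: "(\<Sum>s\<in>UNIV. \<Sum>y\<in>UNIV. \<rho> s y) = 1"
    and P_nonneg: "\<forall>s a s' y'. 0 \<le> P s a s' y'"
    and P_sum: "\<forall>s a. (\<Sum>s'\<in>UNIV. \<Sum>y'\<in>UNIV. P s a s' y') = 1"
    and r_bounds: "\<forall>s a. 0 \<le> r s a \<and> r s a \<le> Rmax"
    and gamma: "0 \<le> \<gamma>" "\<gamma> < 1"
    and L_pos: "1 \<le> L"
    and mu_policy: "\<forall>l<L. \<forall>z. (\<forall>a. 0 \<le> \<mu> l z a) \<and> (\<Sum>a\<in>UNIV. \<mu> l z a) = 1"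
    and conv: "\<forall>l<L. \<forall>s y z a.
       (\<lambda>k. chain_law \<rho> P \<phi> z0 a0 L \<mu> (l + k * L) s y z a) \<longlonglongrightarrow> \<zeta> l s y z a"
    and zeta_pos: "\<forall>l<L. \<forall>z a. (\<Sum>s\<in>UNIV. \<Sum>y\<in>UNIV. \<zeta> l s y z a) > 0"
    and Q_fix: "\<forall>l<L. \<forall>z a. Q l z a = r_mu r \<zeta> l z a
       + \<gamma> * (\<Sum>z'\<in>UNIV. P_mu P \<phi> \<zeta> l z a z' * V_mu Q (Suc l mod L) z')"
    and pi_argmax: "\<forall>l<L. \<forall>z. Q l z (\<pi>\<mu> l z) = V_mu Q l z"
    and F_cb: "conv_balanced F"
    and t_pos: "1 \<le> t"
  shows "(\<forall>l<L. delta_err \<rho> P \<phi> z0 a0 L \<zeta> F ((t + l) mod L) (t + l) \<noteq> \<infinity>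
              \<and> minkowski F (V_mu Q ((t + l + 1) mod L)) \<noteq> \<infinity>) \<longrightarrow>
    (SUP h\<in>{h. feasible \<rho> P t h}.
        ereal (opt_value \<rho> P r \<gamma> t h - value_fun \<rho> P r \<gamma> (hist_policy_of \<phi> z0 a0 L \<pi>\<mu>) t h))
    \<le> ereal (2 / (1 - \<gamma> ^ L)) *
       (\<Sum>l<L. ereal (\<gamma> ^ l) *
          (eps_err \<rho> P r \<phi> z0 a0 L \<zeta> ((t + l) mod L) (t + l)
           + ereal \<gamma> * delta_err \<rho> P \<phi> z0 a0 L \<zeta> F ((t + l) mod L) (t + l)
             * minkowski F (V_mu Q ((t + l + 1) mod L))))"
proof (intro impI)
  assume fin: "\<forall>l<L. delta_err \<rho> P \<phi> z0 a0 L \<zeta> F ((t + l) mod L) (t + l) \<noteq> \<infinity>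
              \<and> minkowski F (V_mu Q ((t + l + 1) mod L)) \<noteq> \<infinity>"
  define eps where "eps l = eps_err \<rho> P r \<phi> z0 a0 L \<zeta> ((t + l) mod L) (t + l)" for l
  define del where "del l = delta_err \<rho> P \<phi> z0 a0 L \<zeta> F ((t + l) mod L) (t + l)" for l
  define mk where "mk l = minkowski F (V_mu Q ((t + l + 1) mod L))" for l
  define e where "e l = real_of_ereal (eps l)" for l
  define d where "d l = real_of_ereal (del l)" for l
  define m where "m l = real_of_ereal (mk l)" for l
  have Lp: "0 < L" using L_pos by simp
  have r_nonneg: "\<forall>s a. 0 \<le> r s a" using r_bounds by blast
  have feas_ex: "\<exists>h. feasible \<rho> P n h" if "1 \<le> n" for n
    using feasible_exists[OF rho_sum P_sum that] .
  have zeta_nn: "0 \<le> \<zeta> l s y z a" if "l < L" for l s y z a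
    using zeta_nonneg[OF rho_nonneg P_nonneg L_pos mu_policy conv that] .
  have za_norm: "(\<forall>s. 0 \<le> zeta_s_given_za \<zeta> l s z a) \<and> (\<Sum>s\<in>UNIV. zeta_s_given_za \<zeta> l s z a) = 1"
    if "l < L" for l z a
  proof -
    have pos: "0 < (\<Sum>s'\<in>UNIV. \<Sum>y\<in>UNIV. \<zeta> l s' y z a)" using zeta_pos that by blast
    show ?thesis unfolding zeta_s_given_za_def using pos zeta_nn[OF that]
      by (auto simp: sum_divide_distrib[symmetric] sum_nonneg)
  qed
  have eps_pt: "\<bar>cond_reward \<rho> P r h a - (\<Sum>s\<in>UNIV. r s a * zeta_s_given_za \<zeta> l s (agent_state \<phi> z0 a0 h) a)\<bar> \<le> Rmax"
    if "feasible \<rho> P \<tau> h" "l < L" for \<tau> h a l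
  proof -
    have Sp: "0 < (\<Sum>s\<in>UNIV. fwd \<rho> P h s)" using that unfolding feasible_def by simp
    have c1: "0 \<le> cond_reward \<rho> P r h a" "cond_reward \<rho> P r h a \<le> Rmax"
      unfolding cond_reward_def using convex_bound[OF belief_norm[OF Sp rho_nonneg P_nonneg], of "\<lambda>s. r s a" Rmax] r_bounds by auto
    have c2: "0 \<le> (\<Sum>s\<in>UNIV. zeta_s_given_za \<zeta> l s (agent_state \<phi> z0 a0 h) a * r s a)"
        "(\<Sum>s\<in>UNIV. zeta_s_given_za \<zeta> l s (agent_state \<phi> z0 a0 h) a * r s a) \<le> Rmax"
      using convex_bound[of "\<lambda>s. zeta_s_given_za \<zeta> l s (agent_state \<phi> z0 a0 h) a" "\<lambda>s. r s a" Rmax]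
        za_norm[OF that(2)] r_bounds by auto
    show ?thesis using c1 c2 by (simp add: mult.commute abs_le_iff)
  qed
  have eps_fin: "eps l = ereal (e l) \<and> 0 \<le> e l" for l
  proof -
    let ?l = "(t + l) mod L"
    have lL: "?l < L" using Lp by simp
    have up: "eps l \<le> ereal Rmax"
      unfolding eps_def eps_err_def
      by (intro SUP_least) (use eps_pt[OF _ lL] in auto)
    obtain h where h: "feasible \<rho> P (t + l) h" using feas_ex t_pos by fastforce
    let ?X = "\<lambda>\<tau> h a. ereal \<bar>cond_reward \<rho> P r h a
               - (\<Sum>s\<in>UNIV. r s a * zeta_s_given_za \<zeta> ?l s (agent_state \<phi> z0 a0 h) a)\<bar>"
    have "?X (t+l) h undefined \<le> (SUP a\<in>UNIV. ?X (t+l) h a)" by (rule SUP_upper) simp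
    also have "\<dots> \<le> (SUP h\<in>{h. feasible \<rho> P (t+l) h}. SUP a\<in>UNIV. ?X (t+l) h a)" by (rule SUP_upper) (use h in simp)
    also have "\<dots> \<le> eps l" unfolding eps_def eps_err_def by (rule SUP_upper) simp
    finally have lo: "0 \<le> eps l" by (rule order_trans[rotated]) simp
    have "eps l \<noteq> \<infinity>" "eps l \<noteq> -\<infinity>" using up lo by auto
    then have "eps l = ereal (e l)" unfolding e_def by (cases "eps l") auto
    then show ?thesis using lo by simp
  qed
  have Fne: "F \<noteq> {}"
  proof
    assume "F = {}"
    then have "minkowski F (V_mu Q ((t + 0 + 1) mod L)) = \<infinity>"
      unfolding minkowski_def by (simp add: top_ereal_def)
    then show False using fin Lp by blast
  qed
  have ipm_nn: "0 \<le> ipm F \<xi>1 \<xi>2" for \<xi>1 \<xi>2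
  proof -
    obtain f where f: "f \<in> F" using Fne by blast
    have "ereal \<bar>(\<Sum>z\<in>UNIV. f z * \<xi>1 z) - (\<Sum>z\<in>UNIV. f z * \<xi>2 z)\<bar> \<le> ipm F \<xi>1 \<xi>2"
      unfolding ipm_def by (rule SUP_upper[OF f])
    then show ?thesis by (rule order_trans[rotated]) simp
  qed
  have del_fin: "del l = ereal (d l) \<and> 0 \<le> d l" if "l < L" for l
  proof -
    let ?l = "(t + l) mod L"
    obtain h where h: "feasible \<rho> P (t + l) h" using feas_ex t_pos by fastforce
    let ?X = "\<lambda>\<tau> h a. ipm F (next_agent_dist \<rho> P \<phi> z0 a0 h a) (P_mu P \<phi> \<zeta> ?l (agent_state \<phi> z0 a0 h) a)"
    have "?X (t+l) h undefined \<le> (SUP a\<in>UNIV. ?X (t+l) h a)" by (rule SUP_upper) simp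
    also have "\<dots> \<le> (SUP h\<in>{h. feasible \<rho> P (t+l) h}. SUP a\<in>UNIV. ?X (t+l) h a)" by (rule SUP_upper) (use h in simp)
    also have "\<dots> \<le> del l" unfolding del_def delta_err_def by (rule SUP_upper) simp
    finally have lo: "0 \<le> del l" using ipm_nn order_trans by blast
    have "del l \<noteq> \<infinity>" using fin that unfolding del_def by blast
    then have "del l = ereal (d l)" using lo unfolding d_def by (cases "del l") auto
    then show ?thesis using lo by simp
  qed
  have mk_fin: "mk l = ereal (m l) \<and> 0 \<le> m l" if "l < L" for l
  proof -
    have lo: "0 \<le> mk l" unfolding mk_def minkowski_def by (rule INF_greatest) simp
    have "mk l \<noteq> \<infinity>" using fin that unfolding mk_def by blast
    then have "mk l = ereal (m l)" using lo unfolding m_def by (cases "mk l") auto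
    then show ?thesis using lo by simp
  qed
  define f where "f l = e l + \<gamma> * d l * m l" for l
  define E where "E \<tau> = f ((\<tau> - t) mod L)" for \<tau>
  have f_nn: "\<forall>l<L. 0 \<le> f l" unfolding f_def using eps_fin del_fin mk_fin gamma by simp
  have key: "\<bar>cond_reward \<rho> P r h a + \<gamma> * (\<Sum>z'\<in>UNIV. next_agent_dist \<rho> P \<phi> z0 a0 h a z' * V_mu Q (Suc \<tau> mod L) z')
            - Q (\<tau> mod L) (agent_state \<phi> z0 a0 h) a\<bar> \<le> E \<tau>"
    if tau: "t \<le> \<tau>" and h: "feasible \<rho> P \<tau> h" for \<tau> h a
  proof -
    define j where "j = (\<tau> - t) mod L"
    define lj where "lj = \<tau> mod L"
    define z where "z = agent_state \<phi> z0 a0 h"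
    have jL: "j < L" unfolding j_def using Lp by simp
    have ljL: "lj < L" unfolding lj_def using Lp by simp
    have tj: "(t + j) mod L = lj" unfolding j_def lj_def using tau
      by (metis le_add_diff_inverse mod_add_right_eq)
    have tj1: "(t + j + 1) mod L = Suc \<tau> mod L" using tj unfolding lj_def
      by (metis Suc_eq_plus1 mod_Suc_eq)
    have tjle: "t + j \<le> \<tau>" unfolding j_def using tau
      by (metis add_le_cancel_left le_add_diff_inverse mod_less_eq_dividend)
    have tau_mem: "\<tau> \<in> {\<tau>'. t + j \<le> \<tau>' \<and> \<tau>' mod L = (t + j) mod L}" using tjle tj unfolding lj_def by simp
    let ?X = "\<lambda>\<tau> h a. ereal \<bar>cond_reward \<rho> P r h a
               - (\<Sum>s\<in>UNIV. r s a * zeta_s_given_za \<zeta> ((t + j) mod L) s (agent_state \<phi> z0 a0 h) a)\<bar>"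
    have "?X \<tau> h a \<le> (SUP a\<in>UNIV. ?X \<tau> h a)" by (rule SUP_upper) simp
    also have "\<dots> \<le> (SUP h\<in>{h. feasible \<rho> P \<tau> h}. SUP a\<in>UNIV. ?X \<tau> h a)" by (rule SUP_upper) (use h in simp)
    also have "\<dots> \<le> eps j" unfolding eps_def eps_err_def by (rule SUP_upper[OF tau_mem])
    finally have "?X \<tau> h a \<le> ereal (e j)" using eps_fin by simp
    then have R1: "\<bar>cond_reward \<rho> P r h a - (\<Sum>s\<in>UNIV. r s a * zeta_s_given_za \<zeta> lj s z a)\<bar> \<le> e j"
      unfolding tj z_def by simp
    have R2: "(\<Sum>s\<in>UNIV. r s a * zeta_s_given_za \<zeta> lj s z a) = r_mu r \<zeta> lj z a"
      unfolding r_mu_def using zeta_cond_eq[OF L_pos mu_policy conv zeta_pos ljL] by simp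
    let ?Y = "\<lambda>\<tau> h a. ipm F (next_agent_dist \<rho> P \<phi> z0 a0 h a) (P_mu P \<phi> \<zeta> ((t + j) mod L) (agent_state \<phi> z0 a0 h) a)"
    have "?Y \<tau> h a \<le> (SUP a\<in>UNIV. ?Y \<tau> h a)" by (rule SUP_upper) simp
    also have "\<dots> \<le> (SUP h\<in>{h. feasible \<rho> P \<tau> h}. SUP a\<in>UNIV. ?Y \<tau> h a)" by (rule SUP_upper) (use h in simp)
    also have "\<dots> \<le> del j" unfolding del_def delta_err_def by (rule SUP_upper[OF tau_mem])
    finally have Yle: "?Y \<tau> h a \<le> ereal (d j)" using del_fin[OF jL] by simp
    define x where "x = real_of_ereal (?Y \<tau> h a)"
    have Yx: "?Y \<tau> h a = ereal x" unfolding x_def using Yle ipm_nn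
      by (cases "?Y \<tau> h a") auto
    have xd: "x \<le> d j" using Yle Yx by simp
    have T1: "\<bar>(\<Sum>z'\<in>UNIV. V_mu Q (Suc \<tau> mod L) z' * next_agent_dist \<rho> P \<phi> z0 a0 h a z')
              - (\<Sum>z'\<in>UNIV. V_mu Q (Suc \<tau> mod L) z' * P_mu P \<phi> \<zeta> lj z a z')\<bar> \<le> x * m j"
      using ipm_mink[OF Yx, of "V_mu Q (Suc \<tau> mod L)" "m j"] mk_fin[OF jL] tj tj1
      unfolding mk_def z_def by simp
    have T2: "x * m j \<le> d j * m j" using xd mk_fin[OF jL] by (simp add: mult_right_mono)
    have Qeq: "Q lj z a = r_mu r \<zeta> lj z a + \<gamma> * (\<Sum>z'\<in>UNIV. P_mu P \<phi> \<zeta> lj z a z' * V_mu Q (Suc \<tau> mod L) z')"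
      using Q_fix ljL unfolding lj_def by (simp add: mod_Suc_eq)
    have A: "(\<Sum>z'\<in>UNIV. next_agent_dist \<rho> P \<phi> z0 a0 h a z' * V_mu Q (Suc \<tau> mod L) z')
          = (\<Sum>z'\<in>UNIV. V_mu Q (Suc \<tau> mod L) z' * next_agent_dist \<rho> P \<phi> z0 a0 h a z')"
      by (simp add: mult.commute)
    have B: "(\<Sum>z'\<in>UNIV. P_mu P \<phi> \<zeta> lj z a z' * V_mu Q (Suc \<tau> mod L) z')
          = (\<Sum>z'\<in>UNIV. V_mu Q (Suc \<tau> mod L) z' * P_mu P \<phi> \<zeta> lj z a z')"
      by (simp add: mult.commute)
    define a1 where "a1 = (\<Sum>z'\<in>UNIV. V_mu Q (Suc \<tau> mod L) z' * next_agent_dist \<rho> P \<phi> z0 a0 h a z')"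
    define b1 where "b1 = (\<Sum>z'\<in>UNIV. V_mu Q (Suc \<tau> mod L) z' * P_mu P \<phi> \<zeta> lj z a z')"
    have "\<bar>a1 - b1\<bar> \<le> d j * m j" using T1 T2 unfolding a1_def b1_def by linarith
    then have "\<gamma> * \<bar>a1 - b1\<bar> \<le> \<gamma> * (d j * m j)" using gamma by (simp add: mult_left_mono)
    then have G: "\<bar>\<gamma> * a1 - \<gamma> * b1\<bar> \<le> \<gamma> * (d j * m j)" using gamma
      by (simp add: abs_mult right_diff_distrib[symmetric])
    have "\<bar>cond_reward \<rho> P r h a + \<gamma> * a1 - (r_mu r \<zeta> lj z a + \<gamma> * b1)\<bar> \<le> e j + \<gamma> * (d j * m j)"
      using R1 R2 G by linarith
    then show ?thesis unfolding E_def f_def j_def[symmetric] Qeq[unfolded B, folded b1_def, symmetric]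
      A[folded a1_def] lj_def[symmetric] z_def[symmetric] by (simp add: mult.assoc)
  qed
  define Wv where "Wv \<tau> h = V_mu Q (\<tau> mod L) (agent_state \<phi> z0 a0 h)" for \<tau> and h :: "('y,'a) hist"
  define M where "M = (\<Sum>l<L. \<Sum>z\<in>UNIV. \<bar>V_mu Q l z\<bar>)"
  have Mb: "\<forall>\<tau> h. \<bar>Wv \<tau> h\<bar> \<le> M"
  proof (intro allI)
    fix \<tau> h
    have "\<bar>Wv \<tau> h\<bar> \<le> (\<Sum>z\<in>UNIV. \<bar>V_mu Q (\<tau> mod L) z\<bar>)"
      unfolding Wv_def by (rule member_le_sum) auto
    also have "\<dots> \<le> M" unfolding M_def
      by (rule member_le_sum[where f="\<lambda>l. \<Sum>z\<in>UNIV. \<bar>V_mu Q l z\<bar>"]) (auto simp: sum_nonneg Lp)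
    finally show "\<bar>Wv \<tau> h\<bar> \<le> M" .
  qed
  have M0: "0 \<le> M" using Mb by (meson abs_ge_zero order_trans)
  have Q_le_V: "Q l z a \<le> V_mu Q l z" for l z a
    unfolding V_mu_def by (rule Max_ge) auto
  have step_eq: "(\<Sum>s\<in>UNIV. fwd \<rho> P h s * r s a)
       + \<gamma> * (\<Sum>y\<in>UNIV. (\<Sum>s'\<in>UNIV. fwd \<rho> P (hext h a y) s') * Wv (Suc \<tau>) (hext h a y))
       = (\<Sum>s\<in>UNIV. fwd \<rho> P h s) * (cond_reward \<rho> P r h a
          + \<gamma> * (\<Sum>z'\<in>UNIV. next_agent_dist \<rho> P \<phi> z0 a0 h a z' * V_mu Q (Suc \<tau> mod L) z'))"
    if Sp: "0 < (\<Sum>s\<in>UNIV. fwd \<rho> P h s)" for \<tau> h a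
  proof -
    have w: "Wv (Suc \<tau>) (hext h a y) = V_mu Q (Suc \<tau> mod L) (\<phi> (agent_state \<phi> z0 a0 h) y a)" for y
      unfolding Wv_def agent_state_hext ..
    show ?thesis unfolding w cond_reward_mass[OF Sp] nad_mass[OF Sp]
      by (simp add: algebra_simps)
  qed
  have K_up: "\<forall>\<tau> h a. t \<le> \<tau> \<longrightarrow> hist_len h = \<tau> \<longrightarrow> 0 < (\<Sum>s\<in>UNIV. fwd \<rho> P h s) \<longrightarrow>
       (\<Sum>s\<in>UNIV. fwd \<rho> P h s * r s a)
       + \<gamma> * (\<Sum>y\<in>UNIV. (\<Sum>s'\<in>UNIV. fwd \<rho> P (hext h a y) s') * Wv (Suc \<tau>) (hext h a y))
       \<le> (\<Sum>s\<in>UNIV. fwd \<rho> P h s) * (Wv \<tau> h + E \<tau>)"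
  proof (intro allI impI)
    fix \<tau> h a
    assume tau: "t \<le> \<tau>" and hl: "hist_len h = \<tau>" and Sp: "0 < (\<Sum>s\<in>UNIV. fwd \<rho> P h s)"
    have fe: "feasible \<rho> P \<tau> h" unfolding feasible_def using hl Sp by simp
    have "cond_reward \<rho> P r h a
          + \<gamma> * (\<Sum>z'\<in>UNIV. next_agent_dist \<rho> P \<phi> z0 a0 h a z' * V_mu Q (Suc \<tau> mod L) z')
          \<le> Q (\<tau> mod L) (agent_state \<phi> z0 a0 h) a + E \<tau>"
      using key[OF tau fe, of a] by linarith
    also have "\<dots> \<le> Wv \<tau> h + E \<tau>" unfolding Wv_def using Q_le_V by simp
    finally show "(\<Sum>s\<in>UNIV. fwd \<rho> P h s * r s a)
       + \<gamma> * (\<Sum>y\<in>UNIV. (\<Sum>s'\<in>UNIV. fwd \<rho> P (hext h a y) s') * Wv (Suc \<tau>) (hext h a y))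
       \<le> (\<Sum>s\<in>UNIV. fwd \<rho> P h s) * (Wv \<tau> h + E \<tau>)"
      unfolding step_eq[OF Sp] using Sp by (simp add: mult_left_mono)
  qed
  define act where "act \<tau> h = \<pi>\<mu> (\<tau> mod L) (agent_state \<phi> z0 a0 h)" for \<tau> and h :: "('y,'a) hist"
  have K_lo: "\<forall>\<tau> h. t \<le> \<tau> \<longrightarrow> hist_len h = \<tau> \<longrightarrow> 0 < (\<Sum>s\<in>UNIV. fwd \<rho> P h s) \<longrightarrow>
       (\<Sum>s\<in>UNIV. fwd \<rho> P h s) * (Wv \<tau> h - E \<tau>) \<le>
       (\<Sum>s\<in>UNIV. fwd \<rho> P h s * r s (act \<tau> h))
       + \<gamma> * (\<Sum>y\<in>UNIV. (\<Sum>s'\<in>UNIV. fwd \<rho> P (hext h (act \<tau> h) y) s') * Wv (Suc \<tau>) (hext h (act \<tau> h) y))"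
  proof (intro allI impI)
    fix \<tau> h
    assume tau: "t \<le> \<tau>" and hl: "hist_len h = \<tau>" and Sp: "0 < (\<Sum>s\<in>UNIV. fwd \<rho> P h s)"
    have fe: "feasible \<rho> P \<tau> h" unfolding feasible_def using hl Sp by simp
    have "Wv \<tau> h = Q (\<tau> mod L) (agent_state \<phi> z0 a0 h) (act \<tau> h)"
      unfolding Wv_def act_def using pi_argmax Lp by simp
    then have "Wv \<tau> h - E \<tau> \<le> cond_reward \<rho> P r h (act \<tau> h)
          + \<gamma> * (\<Sum>z'\<in>UNIV. next_agent_dist \<rho> P \<phi> z0 a0 h (act \<tau> h) z' * V_mu Q (Suc \<tau> mod L) z')"
      using key[OF tau fe, of "act \<tau> h"] by linarith
    then show "(\<Sum>s\<in>UNIV. fwd \<rho> P h s) * (Wv \<tau> h - E \<tau>) \<le>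
       (\<Sum>s\<in>UNIV. fwd \<rho> P h s * r s (act \<tau> h))
       + \<gamma> * (\<Sum>y\<in>UNIV. (\<Sum>s'\<in>UNIV. fwd \<rho> P (hext h (act \<tau> h) y) s') * Wv (Suc \<tau>) (hext h (act \<tau> h) y))"
      unfolding step_eq[OF Sp] using Sp by (simp add: mult_left_mono)
  qed
  define C where "C = (\<Sum>l<L. \<gamma>^l * f l) / (1 - \<gamma>^L)"
  have gL: "\<gamma>^L < 1" using gamma L_pos by (simp add: power_less_one_iff)
  have C0: "0 \<le> C" unfolding C_def using gL f_nn gamma by (intro divide_nonneg_pos sum_nonneg) auto
  have sumE: "(\<Sum>k<n. \<gamma>^k * E (t+k)) \<le> C" for n
    unfolding E_def C_def using periodic_bound[OF gamma L_pos f_nn, of n] by simp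
  have gpow: "(\<lambda>n. \<gamma>^n) \<longlonglongrightarrow> 0" by (rule LIMSEQ_power_zero) (use gamma in simp)
  have gt: "0 \<le> \<gamma>^t" "\<gamma>^t \<le> 1" using gamma by (auto simp: power_le_one)
  have val_up: "value_fun \<rho> P r \<gamma> \<pi> t h \<le> \<gamma>^t * (Wv t h + C)"
    if pol: "is_policy \<pi>" and fe: "feasible \<rho> P t h" for \<pi> h
  proof -
    have hl: "hist_len h = t" and Sp: "0 < (\<Sum>s\<in>UNIV. fwd \<rho> P h s)" using fe unfolding feasible_def by auto
    define S where "S = (\<Sum>s\<in>UNIV. fwd \<rho> P h s)"
    have G2: "disc_ret P r \<gamma> \<pi> n t h (fwd \<rho> P h) \<le> \<gamma>^t * S * (Wv t h + C + \<gamma>^n * M)" for n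
    proof -
      have "disc_ret P r \<gamma> \<pi> n t h (fwd \<rho> P h)
          \<le> \<gamma>^t * S * (Wv t h + ((\<Sum>k<n. \<gamma>^k * E (t+k)) + \<gamma>^n * M))"
        unfolding S_def by (rule upper_bound[OF pol rho_nonneg P_nonneg P_sum gamma(1) Mb K_up order_refl hl])
      also have "\<dots> \<le> \<gamma>^t * S * (Wv t h + C + \<gamma>^n * M)"
        using sumE[of n] gt Sp unfolding S_def by (intro mult_left_mono) auto
      finally show ?thesis .
    qed
    have G3: "\<forall>n. disc_ret P r \<gamma> \<pi> n t h (fwd \<rho> P h) \<le> S * (\<gamma>^t * (Wv t h + C + M))"
    proof
      fix n
      have "\<gamma>^n * M \<le> M" using gamma M0 by (simp add: mult_left_le_one_le power_le_one)
      then have "\<gamma>^t * S * (Wv t h + C + \<gamma>^n * M) \<le> \<gamma>^t * S * (Wv t h + C + M)"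
        using gt Sp unfolding S_def by (intro mult_left_mono) auto
      then show "disc_ret P r \<gamma> \<pi> n t h (fwd \<rho> P h) \<le> S * (\<gamma>^t * (Wv t h + C + M))"
        using G2[of n] by (simp add: mult_ac)
    qed
    have conv1: "(\<lambda>n. disc_ret P r \<gamma> \<pi> n t h (fwd \<rho> P h) / S) \<longlonglongrightarrow> value_fun \<rho> P r \<gamma> \<pi> t h"
      unfolding S_def by (rule value_conv[OF pol rho_nonneg P_nonneg r_nonneg gamma(1) Sp G3[unfolded S_def]])
    have conv2: "(\<lambda>n. \<gamma>^t * (Wv t h + C + \<gamma>^n * M)) \<longlonglongrightarrow> \<gamma>^t * (Wv t h + C + 0 * M)"
      by (intro tendsto_intros gpow)
    have le: "disc_ret P r \<gamma> \<pi> n t h (fwd \<rho> P h) / S \<le> \<gamma>^t * (Wv t h + C + \<gamma>^n * M)" for n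
      using G2[of n] Sp unfolding S_def by (simp add: divide_le_eq mult_ac)
    have "value_fun \<rho> P r \<gamma> \<pi> t h \<le> \<gamma>^t * (Wv t h + C + 0 * M)"
      by (rule LIMSEQ_le[OF conv1 conv2]) (use le in blast)
    then show ?thesis by simp
  qed
  have polform: "\<forall>\<tau> h a. hist_policy_of \<phi> z0 a0 L \<pi>\<mu> \<tau> h a = (if a = act \<tau> h then 1 else 0)"
    unfolding hist_policy_of_def act_def by simp
  have val_lo: "\<gamma>^t * (Wv t h - C) \<le> value_fun \<rho> P r \<gamma> (hist_policy_of \<phi> z0 a0 L \<pi>\<mu>) t h"
    if fe: "feasible \<rho> P t h" for h
  proof -
    let ?\<pi> = "hist_policy_of \<phi> z0 a0 L \<pi>\<mu>"
    have pol: "is_policy ?\<pi>" by (rule hist_policy_is_policy)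
    have hl: "hist_len h = t" and Sp: "0 < (\<Sum>s\<in>UNIV. fwd \<rho> P h s)" using fe unfolding feasible_def by auto
    define S where "S = (\<Sum>s\<in>UNIV. fwd \<rho> P h s)"
    have G2: "\<gamma>^t * S * (Wv t h - C - \<gamma>^n * M) \<le> disc_ret P r \<gamma> ?\<pi> n t h (fwd \<rho> P h)" for n
    proof -
      have "\<gamma>^t * S * (Wv t h - C - \<gamma>^n * M) \<le> \<gamma>^t * S * (Wv t h - ((\<Sum>k<n. \<gamma>^k * E (t+k)) + \<gamma>^n * M))"
        using sumE[of n] gt Sp unfolding S_def by (intro mult_left_mono) auto
      also have "\<dots> \<le> disc_ret P r \<gamma> ?\<pi> n t h (fwd \<rho> P h)"
        unfolding S_def by (rule lower_bound[OF polform rho_nonneg P_nonneg P_sum gamma(1) Mb K_lo order_refl hl])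
      finally show ?thesis .
    qed
    have G3: "\<forall>n. disc_ret P r \<gamma> ?\<pi> n t h (fwd \<rho> P h) \<le> S * (\<gamma>^t * (Wv t h + C + M))"
    proof
      fix n
      have "disc_ret P r \<gamma> ?\<pi> n t h (fwd \<rho> P h)
          \<le> \<gamma>^t * S * (Wv t h + ((\<Sum>k<n. \<gamma>^k * E (t+k)) + \<gamma>^n * M))"
        unfolding S_def by (rule upper_bound[OF pol rho_nonneg P_nonneg P_sum gamma(1) Mb K_up order_refl hl])
      also have "\<dots> \<le> \<gamma>^t * S * (Wv t h + C + M)"
      proof -
        have "\<gamma>^n * M \<le> M" using gamma M0 by (simp add: mult_left_le_one_le power_le_one)
        then show ?thesis using sumE[of n] gt Sp unfolding S_def by (intro mult_left_mono) auto
      qed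
      finally show "disc_ret P r \<gamma> ?\<pi> n t h (fwd \<rho> P h) \<le> S * (\<gamma>^t * (Wv t h + C + M))"
        by (simp add: mult_ac)
    qed
    have conv1: "(\<lambda>n. disc_ret P r \<gamma> ?\<pi> n t h (fwd \<rho> P h) / S) \<longlonglongrightarrow> value_fun \<rho> P r \<gamma> ?\<pi> t h"
      unfolding S_def by (rule value_conv[OF pol rho_nonneg P_nonneg r_nonneg gamma(1) Sp G3[unfolded S_def]])
    have conv2: "(\<lambda>n. \<gamma>^t * (Wv t h - C - \<gamma>^n * M)) \<longlonglongrightarrow> \<gamma>^t * (Wv t h - C - 0 * M)"
      by (intro tendsto_intros gpow)
    have le: "\<gamma>^t * (Wv t h - C - \<gamma>^n * M) \<le> disc_ret P r \<gamma> ?\<pi> n t h (fwd \<rho> P h) / S" for n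
      using G2[of n] Sp unfolding S_def by (simp add: le_divide_eq mult_ac)
    have "\<gamma>^t * (Wv t h - C - 0 * M) \<le> value_fun \<rho> P r \<gamma> ?\<pi> t h"
      by (rule LIMSEQ_le[OF conv2 conv1]) (use le in blast)
    then show ?thesis by simp
  qed
  have diff: "opt_value \<rho> P r \<gamma> t h - value_fun \<rho> P r \<gamma> (hist_policy_of \<phi> z0 a0 L \<pi>\<mu>) t h \<le> 2 * C"
    if fe: "feasible \<rho> P t h" for h
  proof -
    have "opt_value \<rho> P r \<gamma> t h \<le> \<gamma>^t * (Wv t h + C)"
      unfolding opt_value_def
      apply (rule cSUP_least)
      subgoal using hist_policy_is_policy[of \<phi> z0 a0 L \<pi>\<mu>] by blast
      subgoal for \<pi> using val_up[of \<pi> h] fe by simp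
      done
    moreover have "\<gamma>^t * (Wv t h - C) \<le> value_fun \<rho> P r \<gamma> (hist_policy_of \<phi> z0 a0 L \<pi>\<mu>) t h"
      using fe by (rule val_lo)
    moreover have "\<gamma>^t * (Wv t h + C) - \<gamma>^t * (Wv t h - C) = \<gamma>^t * (2 * C)"
      by (simp add: right_diff_distrib distrib_left)
    ultimately have "opt_value \<rho> P r \<gamma> t h - value_fun \<rho> P r \<gamma> (hist_policy_of \<phi> z0 a0 L \<pi>\<mu>) t h \<le> \<gamma>^t * (2 * C)"
      by linarith
    also have "\<dots> \<le> 2 * C" using gt C0 by (simp add: mult_left_le_one_le)
    finally show ?thesis .
  qed
  have rhs: "ereal (2 / (1 - \<gamma> ^ L)) *
       (\<Sum>l<L. ereal (\<gamma> ^ l) *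
          (eps_err \<rho> P r \<phi> z0 a0 L \<zeta> ((t + l) mod L) (t + l)
           + ereal \<gamma> * delta_err \<rho> P \<phi> z0 a0 L \<zeta> F ((t + l) mod L) (t + l)
             * minkowski F (V_mu Q ((t + l + 1) mod L)))) = ereal (2 * C)"
  proof -
    have "(\<Sum>l<L. ereal (\<gamma> ^ l) *
          (eps_err \<rho> P r \<phi> z0 a0 L \<zeta> ((t + l) mod L) (t + l)
           + ereal \<gamma> * delta_err \<rho> P \<phi> z0 a0 L \<zeta> F ((t + l) mod L) (t + l)
             * minkowski F (V_mu Q ((t + l + 1) mod L)))) = (\<Sum>l<L. ereal (\<gamma>^l * f l))"
    proof (rule sum.cong[OF refl])
      fix l assume "l \<in> {..<L}"
      then have lL: "l < L" by simp
      show "ereal (\<gamma> ^ l) *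
          (eps_err \<rho> P r \<phi> z0 a0 L \<zeta> ((t + l) mod L) (t + l)
           + ereal \<gamma> * delta_err \<rho> P \<phi> z0 a0 L \<zeta> F ((t + l) mod L) (t + l)
             * minkowski F (V_mu Q ((t + l + 1) mod L))) = ereal (\<gamma>^l * f l)"
        using eps_fin[of l] del_fin[OF lL] mk_fin[OF lL] unfolding eps_def del_def mk_def f_def
        by simp
    qed
    also have "\<dots> = ereal (\<Sum>l<L. \<gamma>^l * f l)" by simp
    finally show ?thesis unfolding C_def by simp
  qed
  show "(SUP h\<in>{h. feasible \<rho> P t h}.
        ereal (opt_value \<rho> P r \<gamma> t h - value_fun \<rho> P r \<gamma> (hist_policy_of \<phi> z0 a0 L \<pi>\<mu>) t h))
    \<le> ereal (2 / (1 - \<gamma> ^ L)) *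
       (\<Sum>l<L. ereal (\<gamma> ^ l) *
          (eps_err \<rho> P r \<phi> z0 a0 L \<zeta> ((t + l) mod L) (t + l)
           + ereal \<gamma> * delta_err \<rho> P \<phi> z0 a0 L \<zeta> F ((t + l) mod L) (t + l)
             * minkowski F (V_mu Q ((t + l + 1) mod L))))"
    unfolding rhs
    by (rule SUP_least) (use diff in simp)
qed

end
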